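(* Let $M \in \mathcal{E}^2$ and let $p \in \mathbb{M} \cap M$. Then there is a condition $p^M \in \mathbb{M}$ which is the smallest element of $\mathbb{M}$ extending $p$ and containing $M$ as an element; that is, $p^M \le p$, $M \in p^M$, and every $r \in \mathbb{M}$ with $r \le p$ and $M \in r$ satisfies $r \le p^M$.
   Context: Fix a well-ordering $\unlhd$ of $H(\aleph_2)$; "elementary submodel of $H(\aleph_2)$" means elementary submodel of the structure $(H(\aleph_2),\in,\unlhd)$. An elementary submodel $P$ of $H(\aleph_2)$ of size $\aleph_1$ is internally approachable if it is the union of an increasing continuous $\in$-chain $\langle P_\xi:\xi<\omega_1\rangle$ of countable elementary submodels of $H(\aleph_2)$ such that $\langle P_\xi:\xi<\eta\rangle\in P_{\eta+1}$ for every $\eta<\omega_1$. Let $\mathcal{E}^2_0$ be the set of all countable elementary submodels of $H(\aleph_2)$, $\mathcal{E}^2_1$ the set of all internally approachable elementary submodels of $H(\aleph_2)$ of size $\aleph_1$, and $\mathcal{E}^2=\mathcal{E}^2_0\cup\mathcal{E}^2_1$. The forcing $\mathbb{M}$ consists of all finite sets $p$ of models in $\mathcal{E}^2$ which form an $\in$-chain (can be enumerated as $M_0\in M_1\in\dots\in M_n$) and are closed under pairwise intersection; $q\le p$ iff $p\subseteq q$. *)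

theory Defs
  imports Main "HOL-Library.Countable_Set"
begin

text \<open>The set-theoretic universe is modelled by a type 'v with a membership
relation mem.  Then the elements of hereditary
size at most aleph_1 form (an isomorphic copy of) the true H(aleph_2).\<close>

definition ext :: "('v \<Rightarrow> 'v \<Rightarrow> bool) \<Rightarrow> 'v \<Rightarrow> 'v set" where
  "ext mem x = {y. mem y x}"

definition aleph1 :: "nat set rel" where
  "aleph1 = cardSuc natLeq"

definition aleph2 :: "nat set set rel" where
  "aleph2 = cardSuc aleph1"

definition universe :: "('v \<Rightarrow> 'v \<Rightarrow> bool) \<Rightarrow> bool" where
  "universe mem \<longleftrightarrow>
     wf {(x, y). mem x y}
   \<and> (\<forall>x y. ext mem x = ext mem y \<longrightarrow> x = y)
   \<and> (\<forall>A :: 'v set. (card_of A, aleph1) \<in> ordLeq \<longrightarrow> (\<exists>x. ext mem x = A))"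

definition trcl :: "('v \<Rightarrow> 'v \<Rightarrow> bool) \<Rightarrow> 'v \<Rightarrow> 'v set" where
  "trcl mem x = {y. (y, x) \<in> {(a, b). mem a b}\<^sup>+}"

definition H2 :: "('v \<Rightarrow> 'v \<Rightarrow> bool) \<Rightarrow> 'v set" where
  "H2 mem = {x. (card_of (trcl mem x), aleph2) \<in> ordLess}"

definition wo_H2 :: "('v \<Rightarrow> 'v \<Rightarrow> bool) \<Rightarrow> ('v \<Rightarrow> 'v \<Rightarrow> bool) \<Rightarrow> bool" where
  "wo_H2 mem le \<longleftrightarrow>
     well_order_on (H2 mem) {(x, y). x \<in> H2 mem \<and> y \<in> H2 mem \<and> le x y}"

datatype fm = FMem nat nat | FLe nat nat | FEq nat nat | FNeg fm | FConj fm fm | FEx fm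

fun sat :: "'v set \<Rightarrow> ('v \<Rightarrow> 'v \<Rightarrow> bool) \<Rightarrow> ('v \<Rightarrow> 'v \<Rightarrow> bool) \<Rightarrow> fm \<Rightarrow> (nat \<Rightarrow> 'v) \<Rightarrow> bool" where
  "sat D mem le (FMem i j) a = mem (a i) (a j)"
| "sat D mem le (FLe i j) a = le (a i) (a j)"
| "sat D mem le (FEq i j) a = (a i = a j)"
| "sat D mem le (FNeg \<phi>) a = (\<not> sat D mem le \<phi> a)"
| "sat D mem le (FConj \<phi> \<psi>) a = (sat D mem le \<phi> a \<and> sat D mem le \<psi> a)"
| "sat D mem le (FEx \<phi>) a = (\<exists>x\<in>D. sat D mem le \<phi> (case_nat x a))"

definition elem_sub :: "('v \<Rightarrow> 'v \<Rightarrow> bool) \<Rightarrow> ('v \<Rightarrow> 'v \<Rightarrow> bool) \<Rightarrow> 'v \<Rightarrow> bool" where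
  "elem_sub mem le P \<longleftrightarrow>
     ext mem P \<subseteq> H2 mem
   \<and> (\<forall>\<phi> a. (\<forall>n. a n \<in> ext mem P) \<longrightarrow>
          (sat (ext mem P) mem le \<phi> a \<longleftrightarrow> sat (H2 mem) mem le \<phi> a))"

definition transset :: "('v \<Rightarrow> 'v \<Rightarrow> bool) \<Rightarrow> 'v \<Rightarrow> bool" where
  "transset mem x \<longleftrightarrow> (\<forall>y z. mem z y \<and> mem y x \<longrightarrow> mem z x)"

definition ordinal :: "('v \<Rightarrow> 'v \<Rightarrow> bool) \<Rightarrow> 'v \<Rightarrow> bool" where
  "ordinal mem x \<longleftrightarrow> transset mem x \<and> (\<forall>y. mem y x \<longrightarrow> transset mem y)"

definition Omega1 :: "('v \<Rightarrow> 'v \<Rightarrow> bool) \<Rightarrow> 'v set" where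
  "Omega1 mem = {\<xi>. ordinal mem \<xi> \<and> countable (ext mem \<xi>)}"

definition is_succ :: "('v \<Rightarrow> 'v \<Rightarrow> bool) \<Rightarrow> 'v \<Rightarrow> 'v \<Rightarrow> bool" where
  "is_succ mem s \<eta> \<longleftrightarrow> ext mem s = insert \<eta> (ext mem \<eta>)"

definition is_limit :: "('v \<Rightarrow> 'v \<Rightarrow> bool) \<Rightarrow> 'v \<Rightarrow> bool" where
  "is_limit mem \<eta> \<longleftrightarrow> ordinal mem \<eta> \<and> ext mem \<eta> \<noteq> {} \<and> (\<forall>\<zeta>. \<not> is_succ mem \<eta> \<zeta>)"

definition is_pair :: "('v \<Rightarrow> 'v \<Rightarrow> bool) \<Rightarrow> 'v \<Rightarrow> 'v \<Rightarrow> 'v \<Rightarrow> bool" where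
  "is_pair mem z a b \<longleftrightarrow>
     (\<exists>u v. ext mem z = {u, v} \<and> ext mem u = {a} \<and> ext mem v = {a, b})"

definition is_seq :: "('v \<Rightarrow> 'v \<Rightarrow> bool) \<Rightarrow> 'v \<Rightarrow> 'v \<Rightarrow> ('v \<Rightarrow> 'v) \<Rightarrow> bool" where
  "is_seq mem s \<eta> P \<longleftrightarrow> ext mem s = {z. \<exists>\<xi>. mem \<xi> \<eta> \<and> is_pair mem z \<xi> (P \<xi>)}"

definition E2_0 :: "('v \<Rightarrow> 'v \<Rightarrow> bool) \<Rightarrow> ('v \<Rightarrow> 'v \<Rightarrow> bool) \<Rightarrow> 'v set" where
  "E2_0 mem le = {P. elem_sub mem le P \<and> countable (ext mem P)}"

definition internally_approachable :: "('v \<Rightarrow> 'v \<Rightarrow> bool) \<Rightarrow> ('v \<Rightarrow> 'v \<Rightarrow> bool) \<Rightarrow> 'v \<Rightarrow> bool" where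
  "internally_approachable mem le P \<longleftrightarrow>
     (\<exists>Q :: 'v \<Rightarrow> 'v.
        (\<forall>\<xi>\<in>Omega1 mem. Q \<xi> \<in> E2_0 mem le)
      \<and> (\<forall>\<xi>\<in>Omega1 mem. \<forall>\<eta>\<in>Omega1 mem. mem \<xi> \<eta> \<longrightarrow>
            mem (Q \<xi>) (Q \<eta>) \<and> ext mem (Q \<xi>) \<subseteq> ext mem (Q \<eta>))
      \<and> (\<forall>\<eta>\<in>Omega1 mem. is_limit mem \<eta> \<longrightarrow>
            ext mem (Q \<eta>) = (\<Union>\<xi>\<in>ext mem \<eta>. ext mem (Q \<xi>)))
      \<and> ext mem P = (\<Union>\<xi>\<in>Omega1 mem. ext mem (Q \<xi>))
      \<and> (\<forall>\<eta>\<in>Omega1 mem. \<forall>\<eta>'. is_succ mem \<eta>' \<eta> \<longrightarrow>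
            (\<exists>s. is_seq mem s \<eta> Q \<and> mem s (Q \<eta>'))))"

definition E2_1 :: "('v \<Rightarrow> 'v \<Rightarrow> bool) \<Rightarrow> ('v \<Rightarrow> 'v \<Rightarrow> bool) \<Rightarrow> 'v set" where
  "E2_1 mem le = {P. elem_sub mem le P \<and> (card_of (ext mem P), aleph1) \<in> ordIso
                     \<and> internally_approachable mem le P}"

definition E2 :: "('v \<Rightarrow> 'v \<Rightarrow> bool) \<Rightarrow> ('v \<Rightarrow> 'v \<Rightarrow> bool) \<Rightarrow> 'v set" where
  "E2 mem le = E2_0 mem le \<union> E2_1 mem le"

definition in_chain :: "('v \<Rightarrow> 'v \<Rightarrow> bool) \<Rightarrow> 'v set \<Rightarrow> bool" where
  "in_chain mem A \<longleftrightarrow>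
     (\<exists>xs. set xs = A \<and> (\<forall>i. Suc i < length xs \<longrightarrow> mem (xs ! i) (xs ! Suc i)))"

definition Mforce :: "('v \<Rightarrow> 'v \<Rightarrow> bool) \<Rightarrow> ('v \<Rightarrow> 'v \<Rightarrow> bool) \<Rightarrow> 'v set" where
  "Mforce mem le = {p. finite (ext mem p) \<and> ext mem p \<subseteq> E2 mem le
       \<and> in_chain mem (ext mem p)
       \<and> (\<forall>N\<in>ext mem p. \<forall>N'\<in>ext mem p. \<exists>K\<in>ext mem p. ext mem K = ext mem N \<inter> ext mem N')}"

definition Mle :: "('v \<Rightarrow> 'v \<Rightarrow> bool) \<Rightarrow> 'v \<Rightarrow> 'v \<Rightarrow> bool" where
  "Mle mem q p \<longleftrightarrow> ext mem p \<subseteq> ext mem q"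

end

theory Submission
  imports Defs
begin

unbundle cardinal_syntax

lemma aleph1_Card: "Card_order aleph1"
  unfolding aleph1_def by (simp add: cardSuc_Card_order natLeq_Card_order)

lemma natLeq_le_aleph1: "natLeq \<le>o aleph1"
  unfolding aleph1_def by (simp add: cardSuc_ordLeq natLeq_Card_order)

lemma ctbl_le_aleph1: "countable A \<Longrightarrow> |A| \<le>o aleph1"
proof -
  assume "countable A"
  then obtain f :: "_ \<Rightarrow> nat" where "inj_on f A" by (auto simp: countable_def)
  then have "|A| \<le>o |UNIV :: nat set|" by (intro card_of_ordLeqI) auto
  also have "|UNIV :: nat set| =o natLeq" by (rule card_of_nat)
  finally have "|A| \<le>o natLeq" .
  then show ?thesis using natLeq_le_aleph1 by (rule ordLeq_transitive)
qed

lemma lt_aleph2_iff: "( |A| <o aleph2) = ( |A| \<le>o aleph1)"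
  unfolding aleph2_def using cardSuc_ordLeq_ordLess[OF aleph1_Card card_of_Card_order] by blast

lemma infinite_Field_aleph1: "\<not> finite (Field aleph1)"
proof
  assume "finite (Field aleph1)"
  then have "\<not> natLeq \<le>o |Field aleph1|" using infinite_iff_natLeq_ordLeq by blast
  moreover have "|Field aleph1| =o aleph1" by (rule card_of_Field_ordIso[OF aleph1_Card])
  ultimately show False using natLeq_le_aleph1 ordLeq_ordIso_trans ordIso_symmetric by blast
qed

lemma le_aleph1_Field: "( |A| \<le>o aleph1) = ( |A| \<le>o |Field aleph1| )"
  using card_of_Field_ordIso[OF aleph1_Card] ordLeq_ordIso_trans ordIso_symmetric by blast

lemma union_aleph1:
  assumes "|I| \<le>o aleph1" "\<And>i. i \<in> I \<Longrightarrow> |A i| \<le>o aleph1"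
  shows "|\<Union>i\<in>I. A i| \<le>o aleph1"
  using assms card_of_UNION_ordLeq_infinite[OF infinite_Field_aleph1, of I A]
  by (simp add: le_aleph1_Field)


locale univ =
  fixes mem :: "'v \<Rightarrow> 'v \<Rightarrow> bool"
  assumes U: "universe mem"
begin

abbreviation E where "E \<equiv> ext mem"
abbreviation H where "H \<equiv> H2 mem"

lemma E_iff[simp]: "y \<in> E x \<longleftrightarrow> mem y x" by (simp add: ext_def)

lemma wf_mem: "wf {(x,y). mem x y}" using U by (simp add: universe_def)
lemma ext_inj: "E x = E y \<Longrightarrow> x = y" using U by (simp add: universe_def)
lemma realize: "|A| \<le>o aleph1 \<Longrightarrow> \<exists>x. E x = A" using U by (simp add: universe_def)
lemma realize_ctbl: "countable A \<Longrightarrow> \<exists>x. E x = A" by (rule realize[OF ctbl_le_aleph1])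
lemma mem_irrefl[simp]: "\<not> mem x x"
  using wf_not_refl[OF wf_mem] by auto
lemma mem_asym: "mem x y \<Longrightarrow> \<not> mem y x"
  using wf_not_sym[OF wf_mem] by auto

lemma ext_eqI: "(\<And>t. mem t x \<longleftrightarrow> mem t y) \<Longrightarrow> x = y"
  by (rule ext_inj) auto

lemma trcl_iff: "y \<in> trcl mem x \<longleftrightarrow> (y, x) \<in> {(a,b). mem a b}\<^sup>+"
  by (simp add: trcl_def)

lemma trcl_sub: "trcl mem x \<subseteq> E x \<union> (\<Union>y\<in>E x. trcl mem y)"
proof (rule subsetI)
  fix w assume "w \<in> trcl mem x"
  then have "(w, x) \<in> {(a,b). mem a b}\<^sup>+" by (simp only: trcl_iff)
  from tranclD2[OF this] obtain z where z: "(w,z) \<in> {(a,b). mem a b}\<^sup>*" "(z,x) \<in> {(a,b). mem a b}"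
    by (elim exE conjE)
  have zx: "mem z x" using z(2) by simp
  show "w \<in> E x \<union> (\<Union>y\<in>E x. trcl mem y)"
  proof (cases "w = z")
    case True then show ?thesis using zx by simp
  next
    case False
    from rtranclD[OF z(1)] False have "(w,z) \<in> {(a,b). mem a b}\<^sup>+" by (elim disjE conjE) simp_all
    then have "w \<in> trcl mem z" by (simp only: trcl_iff)
    then show ?thesis using zx by (intro UnI2 UN_I[of z]) simp_all
  qed
qed

lemma trcl_mono: "mem y x \<Longrightarrow> trcl mem y \<subseteq> trcl mem x"
proof
  fix w assume "mem y x" "w \<in> trcl mem y"
  then have "(w,y) \<in> {(a,b). mem a b}\<^sup>+" "(y,x) \<in> {(a,b). mem a b}" by (simp_all add: trcl_def)
  then have "(w,x) \<in> {(a,b). mem a b}\<^sup>+" by (rule trancl_into_trancl)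
  then show "w \<in> trcl mem x" by (simp add: trcl_def)
qed

lemma E_sub_trcl: "E x \<subseteq> trcl mem x"
proof
  fix w assume "w \<in> E x"
  then have "(w,x) \<in> {(a,b). mem a b}" by simp
  then have "(w,x) \<in> {(a,b). mem a b}\<^sup>+" by (rule r_into_trancl)
  then show "w \<in> trcl mem x" by (simp add: trcl_def)
qed

lemma H_down: assumes "x \<in> H" "mem y x" shows "y \<in> H"
proof -
  have "|trcl mem y| \<le>o |trcl mem x|" by (rule card_of_mono1[OF trcl_mono[OF assms(2)]])
  moreover have "|trcl mem x| <o aleph2" using assms(1) by (simp add: H2_def)
  ultimately have "|trcl mem y| <o aleph2" by (rule ordLeq_ordLess_trans)
  then show ?thesis by (simp add: H2_def)
qed

lemma H_card: assumes "x \<in> H" shows "|E x| \<le>o aleph1"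
proof -
  have "|E x| \<le>o |trcl mem x|" by (rule card_of_mono1[OF E_sub_trcl])
  moreover have "|trcl mem x| \<le>o aleph1" using assms by (simp add: H2_def lt_aleph2_iff)
  ultimately show ?thesis by (rule ordLeq_transitive)
qed

lemma H_up: assumes "E x \<subseteq> H" "|E x| \<le>o aleph1" shows "x \<in> H"
proof -
  have "|E x \<union> (\<Union>y\<in>E x. trcl mem y)| \<le>o aleph1"
  proof -
    have "|\<Union>i\<in>{True,False}. (if i then E x else (\<Union>y\<in>E x. trcl mem y))| \<le>o aleph1"
    proof (rule union_aleph1)
      show "|{True, False}| \<le>o aleph1" by (intro ctbl_le_aleph1) simp
      fix i :: bool
      have "|\<Union>y\<in>E x. trcl mem y| \<le>o aleph1"
      proof (rule union_aleph1)
        show "|E x| \<le>o aleph1" by (rule assms(2))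
        fix y assume "y \<in> E x"
        then have "y \<in> H" using assms(1) by blast
        then show "|trcl mem y| \<le>o aleph1" unfolding H2_def lt_aleph2_iff by simp
      qed
      then show "|if i then E x else (\<Union>y\<in>E x. trcl mem y)| \<le>o aleph1" using assms(2) by simp
    qed
    moreover have "(\<Union>i\<in>{True,False}. (if i then E x else (\<Union>y\<in>E x. trcl mem y))) = E x \<union> (\<Union>y\<in>E x. trcl mem y)"
      by auto
    ultimately show ?thesis by simp
  qed
  then have "|trcl mem x| \<le>o aleph1" by (rule ordLeq_transitive[OF card_of_mono1[OF trcl_sub]])
  then show ?thesis by (simp add: H2_def lt_aleph2_iff)
qed

lemma H_ctbl: "countable (E x) \<Longrightarrow> E x \<subseteq> H \<Longrightarrow> x \<in> H"
  by (rule H_up[OF _ ctbl_le_aleph1])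

lemma realize_H: "countable A \<Longrightarrow> A \<subseteq> H \<Longrightarrow> \<exists>x\<in>H. E x = A"
  using realize_ctbl H_ctbl by blast

end

definition fAll where "fAll \<phi> = FNeg (FEx (FNeg \<phi>))"
definition fOr where "fOr \<phi> \<psi> = FNeg (FConj (FNeg \<phi>) (FNeg \<psi>))"
definition fImp where "fImp \<phi> \<psi> = FNeg (FConj \<phi> (FNeg \<psi>))"
definition fIff where "fIff \<phi> \<psi> = FConj (fImp \<phi> \<psi>) (fImp \<psi> \<phi>)"

lemma sat_fAll[simp]: "sat D mem le (fAll \<phi>) a = (\<forall>x\<in>D. sat D mem le \<phi> (case_nat x a))"
  by (simp add: fAll_def)
lemma sat_fOr[simp]: "sat D mem le (fOr \<phi> \<psi>) a = (sat D mem le \<phi> a \<or> sat D mem le \<psi> a)"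
  by (simp add: fOr_def)
lemma sat_fImp[simp]: "sat D mem le (fImp \<phi> \<psi>) a = (sat D mem le \<phi> a \<longrightarrow> sat D mem le \<psi> a)"
  by (simp add: fImp_def)
lemma sat_fIff[simp]: "sat D mem le (fIff \<phi> \<psi>) a = (sat D mem le \<phi> a \<longleftrightarrow> sat D mem le \<psi> a)"
  by (auto simp add: fIff_def)

lemma case_nat_numeral[simp]: "case_nat a f (numeral n) = f (pred_numeral n)"
  by (simp add: numeral_eq_Suc)

definition fExt where "fExt x \<psi> = fAll (fIff (FMem 0 (Suc x)) \<psi>)"
definition fEmpty where "fEmpty x = FNeg (FEx (FMem 0 (Suc x)))"
definition fSucc where "fSucc x y = fExt x (fOr (FMem 0 (Suc y)) (FEq 0 (Suc y)))"
definition fPair where "fPair z a b = FEx (FEx (FConj (fExt (Suc (Suc z)) (fOr (FEq 0 2) (FEq 0 1)))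
   (FConj (fExt 1 (FEq 0 (Suc (Suc (Suc a))))) (fExt 0 (fOr (FEq 0 (Suc (Suc (Suc a)))) (FEq 0 (Suc (Suc (Suc b)))))))))"
definition fTrans where "fTrans x = fAll (fAll (fImp (FConj (FMem 0 1) (FMem 1 (Suc (Suc x)))) (FMem 0 (Suc (Suc x)))))"
definition fOrd where "fOrd x = FConj (fTrans x) (fAll (fImp (FMem 0 (Suc x)) (fTrans 0)))"
definition fZS where "fZS x = fOr (fEmpty x) (FEx (fSucc (Suc x) 0))"
definition fNat where "fNat n = FConj (fOrd n) (FConj (fZS n) (fAll (fImp (FMem 0 (Suc n)) (fZS 0))))"
definition fFun where "fFun g = fAll (fAll (fAll (fAll (fAll (fImp
   (FConj (FMem 4 (Suc (Suc (Suc (Suc (Suc g)))))) (FConj (FMem 3 (Suc (Suc (Suc (Suc (Suc g)))))) (FConj (fPair 4 2 1) (fPair 3 2 0)))) (FEq 1 0))))))"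
definition fCtbl where "fCtbl x = FEx (FConj (fFun 0) (fAll (fImp (FMem 0 (Suc (Suc x)))
   (FEx (FConj (FMem 0 2) (FEx (FConj (fNat 0) (fPair 1 0 2))))))))"
definition fCtblOrd where "fCtblOrd x = FConj (fOrd x) (fCtbl x)"
definition fLimit where "fLimit x = FConj (fOrd x) (FConj (FNeg (fEmpty x)) (FNeg (FEx (fSucc (Suc x) 0))))"

locale univl = univ mem for mem :: "'v \<Rightarrow> 'v \<Rightarrow> bool" +
  fixes le :: "'v \<Rightarrow> 'v \<Rightarrow> bool"
begin

abbreviation Sat where "Sat \<phi> e \<equiv> sat H mem le \<phi> e"

definition "extH x P \<longleftrightarrow> (\<forall>t\<in>H. mem t x \<longleftrightarrow> P t)"
definition "emptyH x \<longleftrightarrow> (\<forall>t\<in>H. \<not> mem t x)"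
definition "succH x y \<longleftrightarrow> extH x (\<lambda>t. mem t y \<or> t = y)"
definition "pairH z a b \<longleftrightarrow> (\<exists>u\<in>H. \<exists>v\<in>H. extH z (\<lambda>t. t = u \<or> t = v) \<and> extH u (\<lambda>t. t = a) \<and> extH v (\<lambda>t. t = a \<or> t = b))"
definition "transH x \<longleftrightarrow> (\<forall>y\<in>H. \<forall>z\<in>H. mem z y \<and> mem y x \<longrightarrow> mem z x)"
definition "ordH x \<longleftrightarrow> transH x \<and> (\<forall>y\<in>H. mem y x \<longrightarrow> transH y)"
definition "zsH x \<longleftrightarrow> emptyH x \<or> (\<exists>k\<in>H. succH x k)"
definition "natH n \<longleftrightarrow> ordH n \<and> zsH n \<and> (\<forall>m\<in>H. mem m n \<longrightarrow> zsH m)"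
definition "funH g \<longleftrightarrow> (\<forall>z1\<in>H. \<forall>z2\<in>H. \<forall>a\<in>H. \<forall>b\<in>H. \<forall>c\<in>H.
    mem z1 g \<and> mem z2 g \<and> pairH z1 a b \<and> pairH z2 a c \<longrightarrow> b = c)"
definition "ctblH x \<longleftrightarrow> (\<exists>g\<in>H. funH g \<and> (\<forall>t\<in>H. mem t x \<longrightarrow> (\<exists>z\<in>H. mem z g \<and> (\<exists>n\<in>H. natH n \<and> pairH z n t))))"
definition "limitH x \<longleftrightarrow> ordH x \<and> \<not> emptyH x \<and> \<not> (\<exists>y\<in>H. succH x y)"

lemma sat_fExt[simp]: "Sat (fExt x \<psi>) e = extH (e x) (\<lambda>t. Sat \<psi> (case_nat t e))"
  by (simp add: fExt_def extH_def)
lemma sat_fEmpty[simp]: "Sat (fEmpty x) e = emptyH (e x)"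
  by (simp add: fEmpty_def emptyH_def)
lemma sat_fSucc[simp]: "Sat (fSucc x y) e = succH (e x) (e y)"
  by (simp add: fSucc_def succH_def)
lemma sat_fPair[simp]: "Sat (fPair z a b) e = pairH (e z) (e a) (e b)"
  by (simp add: fPair_def pairH_def)
lemma sat_fTrans[simp]: "Sat (fTrans x) e = transH (e x)"
  by (auto simp add: fTrans_def transH_def)
lemma sat_fOrd[simp]: "Sat (fOrd x) e = ordH (e x)"
  by (simp add: fOrd_def ordH_def)
lemma sat_fZS[simp]: "Sat (fZS x) e = zsH (e x)"
  by (simp add: fZS_def zsH_def)
lemma sat_fNat[simp]: "Sat (fNat x) e = natH (e x)"
  by (simp add: fNat_def natH_def)
lemma sat_fFun[simp]: "Sat (fFun x) e = funH (e x)"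
  by (simp add: fFun_def funH_def)
lemma sat_fCtbl[simp]: "Sat (fCtbl x) e = ctblH (e x)"
  by (simp add: fCtbl_def ctblH_def)
lemma sat_fLimit[simp]: "Sat (fLimit x) e = limitH (e x)"
  by (simp add: fLimit_def limitH_def)

lemma extH_iff: assumes "x \<in> H" "\<And>t. P t \<Longrightarrow> t \<in> H" shows "extH x P \<longleftrightarrow> E x = {t. P t}"
proof
  assume h: "extH x P"
  show "E x = {t. P t}"
  proof (intro set_eqI iffI)
    fix t assume "t \<in> E x"
    then have "t \<in> H" "mem t x" using assms(1) H_down by auto
    then show "t \<in> {t. P t}" using h unfolding extH_def by simp
  next
    fix t assume "t \<in> {t. P t}"
    then have "t \<in> H" "P t" using assms(2) by auto
    then show "t \<in> E x" using h unfolding extH_def by simp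
  qed
next
  assume "E x = {t. P t}"
  then have "mem t x \<longleftrightarrow> P t" for t by (metis E_iff mem_Collect_eq)
  then show "extH x P" unfolding extH_def by simp
qed

lemma emptyH_iff: "x \<in> H \<Longrightarrow> emptyH x \<longleftrightarrow> E x = {}"
  unfolding emptyH_def by (auto dest: H_down)

lemma succH_iff: "x \<in> H \<Longrightarrow> y \<in> H \<Longrightarrow> succH x y \<longleftrightarrow> is_succ mem x y"
proof -
  assume "x \<in> H" "y \<in> H"
  have "succH x y \<longleftrightarrow> E x = {t. mem t y \<or> t = y}"
    unfolding succH_def by (rule extH_iff) (use \<open>x \<in> H\<close> \<open>y \<in> H\<close> H_down in auto)
  also have "{t. mem t y \<or> t = y} = insert y (E y)" by auto
  finally show ?thesis by (simp add: is_succ_def del: E_iff)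
qed

lemma pairH_iff: assumes "z \<in> H" "a \<in> H" "b \<in> H"
  shows "pairH z a b \<longleftrightarrow> is_pair mem z a b"
proof
  assume "pairH z a b"
  then obtain u v where uv: "u \<in> H" "v \<in> H" "extH z (\<lambda>t. t = u \<or> t = v)" "extH u (\<lambda>t. t = a)" "extH v (\<lambda>t. t = a \<or> t = b)"
    unfolding pairH_def by blast
  have "E z = {u, v}" using uv(3) extH_iff[OF assms(1), of "\<lambda>t. t = u \<or> t = v"] uv(1,2) by auto
  moreover have "E u = {a}" using uv(4) extH_iff[OF uv(1), of "\<lambda>t. t = a"] assms by auto
  moreover have "E v = {a, b}" using uv(5) extH_iff[OF uv(2), of "\<lambda>t. t = a \<or> t = b"] assms by auto
  ultimately show "is_pair mem z a b" unfolding is_pair_def by blast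
next
  assume "is_pair mem z a b"
  then obtain u v where uv: "E z = {u, v}" "E u = {a}" "E v = {a, b}" unfolding is_pair_def by blast
  have "u \<in> H" "v \<in> H" using uv(1) assms(1) H_down by (metis E_iff insertI1 insertI2)+
  then show "pairH z a b" unfolding pairH_def extH_def using uv by (intro bexI[of _ u] bexI[of _ v]) auto
qed

lemma pair_H: assumes "is_pair mem z a b" "z \<in> H" shows "a \<in> H" "b \<in> H"
proof -
  obtain u v where uv: "E z = {u, v}" "E u = {a}" "E v = {a, b}" using assms(1) unfolding is_pair_def by blast
  have "v \<in> H" using uv(1) assms(2) H_down by (metis E_iff insertI1 insertI2)
  then show "a \<in> H" "b \<in> H" using uv(3) H_down by (metis E_iff insertI1 insertI2)+
qed

lemma pair_inj: assumes "is_pair mem z a b" "is_pair mem z c d" shows "a = c \<and> b = d"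
proof -
  obtain u v where uv: "E z = {u, v}" "E u = {a}" "E v = {a, b}" using assms(1) unfolding is_pair_def by blast
  obtain u' v' where uv': "E z = {u', v'}" "E u' = {c}" "E v' = {c, d}" using assms(2) unfolding is_pair_def by blast
  have ac: "a = c"
  proof -
    have "u = u' \<or> u = v'" using uv(1) uv'(1) by blast
    then show ?thesis using uv(2) uv'(2,3) by (metis insert_iff singletonD)
  qed
  have "b = d"
  proof -
    have "v = u' \<or> v = v'" using uv(1) uv'(1) by blast
    moreover have "v' = u \<or> v' = v" using uv(1) uv'(1) by blast
    ultimately show ?thesis using uv(2,3) uv'(2,3) ac by (metis doubleton_eq_iff insert_absorb2 singleton_insert_inj_eq')
  qed
  with ac show ?thesis by simp
qed

lemma pair_unique: assumes "is_pair mem z a b" "is_pair mem z' a b" shows "z = z'"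
proof -
  obtain u v where uv: "E z = {u, v}" "E u = {a}" "E v = {a, b}" using assms(1) unfolding is_pair_def by blast
  obtain u' v' where uv': "E z' = {u', v'}" "E u' = {a}" "E v' = {a, b}" using assms(2) unfolding is_pair_def by blast
  have "u = u'" "v = v'" using uv uv' ext_inj by auto
  then show ?thesis using uv(1) uv'(1) ext_inj by auto
qed

lemma pair_exists: "\<exists>z. is_pair mem z a b"
proof -
  obtain u where u: "E u = {a}" using realize_ctbl[of "{a}"] by auto
  obtain v where v: "E v = {a,b}" using realize_ctbl[of "{a,b}"] by auto
  obtain z where z: "E z = {u,v}" using realize_ctbl[of "{u,v}"] by auto
  show ?thesis using u v z unfolding is_pair_def by blast
qed

lemma pair_exists_H: assumes "a \<in> H" "b \<in> H" shows "\<exists>z\<in>H. is_pair mem z a b"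
proof -
  obtain u where u: "E u = {a}" using realize_ctbl[of "{a}"] by auto
  obtain v where v: "E v = {a,b}" using realize_ctbl[of "{a,b}"] by auto
  obtain z where z: "E z = {u,v}" using realize_ctbl[of "{u,v}"] by auto
  have "u \<in> H" using u assms by (intro H_ctbl) auto
  moreover have "v \<in> H" using v assms by (intro H_ctbl) auto
  ultimately have "z \<in> H" using z by (intro H_ctbl) auto
  then show ?thesis using u v z unfolding is_pair_def by blast
qed

lemma transH_iff: assumes "x \<in> H" shows "transH x \<longleftrightarrow> transset mem x"
  unfolding transH_def transset_def using assms H_down by blast

lemma ordH_iff: assumes "x \<in> H" shows "ordH x \<longleftrightarrow> ordinal mem x"
  unfolding ordH_def ordinal_def using assms H_down transH_iff by blast

definition "zs x \<longleftrightarrow> E x = {} \<or> (\<exists>k. is_succ mem x k)"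

lemma zsH_iff: assumes "x \<in> H" shows "zsH x \<longleftrightarrow> zs x"
proof -
  have "(\<exists>k\<in>H. succH x k) \<longleftrightarrow> (\<exists>k. is_succ mem x k)"
  proof
    assume "\<exists>k. is_succ mem x k"
    then obtain k where k: "is_succ mem x k" by blast
    then have "mem k x" unfolding is_succ_def by (metis E_iff insertI1)
    then have "k \<in> H" using assms H_down by blast
    then show "\<exists>k\<in>H. succH x k" using k succH_iff assms by blast
  qed (use succH_iff assms in blast)
  then show ?thesis unfolding zsH_def zs_def using emptyH_iff assms by simp
qed

definition "isFun g \<longleftrightarrow> (\<forall>z1 z2 a b c. mem z1 g \<and> mem z2 g \<and> is_pair mem z1 a b \<and> is_pair mem z2 a c \<longrightarrow> b = c)"

lemma funH_iff: assumes "g \<in> H" shows "funH g \<longleftrightarrow> isFun g"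
proof
  assume f: "funH g"
  show "isFun g" unfolding isFun_def
  proof (intro allI impI)
    fix z1 z2 a b c assume h: "mem z1 g \<and> mem z2 g \<and> is_pair mem z1 a b \<and> is_pair mem z2 a c"
    then have H: "z1 \<in> H" "z2 \<in> H" using assms H_down by blast+
    then have "a \<in> H" "b \<in> H" "c \<in> H" using h pair_H by blast+
    with H h f show "b = c" unfolding funH_def using pairH_iff by blast
  qed
next
  assume "isFun g"
  then show "funH g" unfolding funH_def isFun_def
    using pairH_iff assms H_down by blast
qed


lemma succ_ex_iff: assumes "x \<in> H" shows "(\<exists>k\<in>H. succH x k) \<longleftrightarrow> (\<exists>k. is_succ mem x k)"
proof
  assume "\<exists>k. is_succ mem x k"
  then obtain k where k: "is_succ mem x k" by blast
  then have "mem k x" unfolding is_succ_def by (metis E_iff insertI1)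
  then have "k \<in> H" using assms H_down by blast
  then show "\<exists>k\<in>H. succH x k" using k succH_iff assms by blast
qed (use succH_iff assms in blast)

lemma limitH_iff: assumes "x \<in> H" shows "limitH x \<longleftrightarrow> is_limit mem x"
  unfolding limitH_def is_limit_def using succ_ex_iff[OF assms] ordH_iff[OF assms] emptyH_iff[OF assms] by blast

lemma ord_elem: assumes "ordinal mem x" "mem y x" shows "ordinal mem y"
  using assms unfolding ordinal_def transset_def by blast

primrec num :: "nat \<Rightarrow> 'v" where
  "num 0 = (SOME x. E x = {})"
| "num (Suc n) = (SOME x. E x = insert (num n) (E (num n)))"

lemma E_num: "E (num n) = num ` {..<n}"
proof (induction n)
  case 0
  have "\<exists>x. E x = {}" using realize_ctbl[of "{}"] by simp
  then have "E (SOME x. E x = {}) = {}" by (rule someI_ex)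
  then show ?case by simp
next
  case (Suc n)
  have "\<exists>x. E x = insert (num n) (E (num n))" using Suc by (intro realize_ctbl) simp
  then have "E (SOME x. E x = insert (num n) (E (num n))) = insert (num n) (E (num n))" by (rule someI_ex)
  then have "E (num (Suc n)) = insert (num n) (E (num n))" by (simp only: num.simps)
  also have "\<dots> = num ` {..<Suc n}" using Suc by (auto simp: lessThan_Suc)
  finally show ?case .
qed

lemma E_num0: "E (num 0) = {}" using E_num[of 0] by (simp only: lessThan_0 image_empty)
lemma E_numS: "E (num (Suc n)) = insert (num n) (E (num n))"
  using E_num[of "Suc n"] E_num[of n] by (simp only: lessThan_Suc image_insert)

lemma num_mem_iff: "mem y (num n) \<longleftrightarrow> (\<exists>m<n. y = num m)"
  using E_num[of n] by (metis E_iff image_iff lessThan_iff)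

lemma num_inj: "num m = num n \<Longrightarrow> m = n"
  by (metis linorder_neqE_nat mem_irrefl num_mem_iff)

lemma num_H: "num n \<in> H"
proof (induction n rule: less_induct)
  case (less n)
  show ?case by (rule H_ctbl) (auto simp: E_num less simp del: E_iff)
qed

lemma num_trans: "transset mem (num n)"
  unfolding transset_def
proof (intro allI impI)
  fix y z assume h: "mem z y \<and> mem y (num n)"
  then obtain m where m: "m < n" "y = num m" unfolding num_mem_iff by blast
  have "mem z (num m)" using h m(2) by simp
  then obtain j where j: "j < m" "z = num j" unfolding num_mem_iff by blast
  then have "j < n" using m(1) by simp
  then show "mem z (num n)" unfolding num_mem_iff using j(2) by blast
qed

lemma num_ord: "ordinal mem (num n)"
  unfolding ordinal_def
proof (intro conjI allI impI)
  show "transset mem (num n)" by (rule num_trans)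
  fix y assume "mem y (num n)"
  then obtain m where "y = num m" unfolding num_mem_iff by blast
  then show "transset mem y" using num_trans by simp
qed

lemma num_zs: "zs (num n)"
proof (cases n)
  case 0 then show ?thesis using E_num0 by (simp add: zs_def del: E_iff)
next
  case (Suc k)
  then have "is_succ mem (num n) (num k)" using E_numS by (simp add: is_succ_def del: E_iff)
  then show ?thesis by (auto simp: zs_def)
qed

lemma nat_char: "ordinal mem x \<Longrightarrow> zs x \<Longrightarrow> (\<forall>m. mem m x \<longrightarrow> zs m) \<Longrightarrow> \<exists>k. x = num k"
proof (induction x rule: wf_induct_rule[OF wf_mem])
  case (1 x)
  show ?case
  proof (cases "E x = {}")
    case True
    then have "x = num 0" using E_num0 ext_inj by metis
    then show ?thesis by blast
  next
    case False
    then obtain k where k: "is_succ mem x k" using 1(3) unfolding zs_def by blast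
    then have kx: "mem k x" unfolding is_succ_def by (metis E_iff insertI1)
    have "ordinal mem k" using ord_elem 1(2) kx by blast
    moreover have "zs k" using 1(4) kx by blast
    moreover have "\<forall>m. mem m k \<longrightarrow> zs m" using 1(2,4) kx unfolding ordinal_def transset_def by blast
    ultimately obtain j where "k = num j" using 1(1) kx by blast
    then have "E x = E (num (Suc j))" using k E_numS unfolding is_succ_def by simp
    then show ?thesis using ext_inj by blast
  qed
qed

lemma natH_iff: assumes "x \<in> H" shows "natH x \<longleftrightarrow> (\<exists>k. x = num k)"
proof -
  have "natH x \<longleftrightarrow> ordinal mem x \<and> zs x \<and> (\<forall>m. mem m x \<longrightarrow> zs m)"
    unfolding natH_def using ordH_iff zsH_iff assms H_down by blast
  then show ?thesis using nat_char num_ord num_zs num_mem_iff by metis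
qed

lemma ctblH_iff: assumes "x \<in> H" shows "ctblH x \<longleftrightarrow> countable (E x)"
proof
  assume "ctblH x"
  then obtain g where g: "g \<in> H" "funH g"
    "\<forall>t\<in>H. mem t x \<longrightarrow> (\<exists>z\<in>H. mem z g \<and> (\<exists>n\<in>H. natH n \<and> pairH z n t))"
    unfolding ctblH_def by blast
  have fg: "isFun g" using g funH_iff by blast
  have ex: "\<exists>k z. mem z g \<and> is_pair mem z (num k) t" if tx: "mem t x" for t
  proof -
    have "t \<in> H" using tx assms H_down by blast
    then obtain z n where "z \<in> H" "mem z g" "n \<in> H" "natH n" "pairH z n t" using g(3) tx by blast
    then show ?thesis using natH_iff pairH_iff \<open>t \<in> H\<close> by blast
  qed
  define f where "f t = (SOME k. \<exists>z. mem z g \<and> is_pair mem z (num k) t)" for t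
  have f: "\<exists>z. mem z g \<and> is_pair mem z (num (f t)) t" if "mem t x" for t
    unfolding f_def using ex[OF that] by (rule someI_ex)
  have "inj_on f (E x)"
  proof (rule inj_onI)
    fix t1 t2 assume "t1 \<in> E x" "t2 \<in> E x" "f t1 = f t2"
    then show "t1 = t2" using f[of t1] f[of t2] fg unfolding isFun_def by auto
  qed
  then show "countable (E x)" by (rule countableI')
next
  assume "countable (E x)"
  then obtain f :: "'v \<Rightarrow> nat" where f: "inj_on f (E x)" by (auto simp: countable_def)
  define pz where "pz t = (SOME z. z \<in> H \<and> is_pair mem z (num (f t)) t)" for t
  have pz: "pz t \<in> H \<and> is_pair mem (pz t) (num (f t)) t" if "mem t x" for t
  proof -
    have "t \<in> H" using that assms H_down by blast
    then have "\<exists>z. z \<in> H \<and> is_pair mem z (num (f t)) t" using pair_exists_H num_H by blast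
    then show ?thesis unfolding pz_def by (rule someI_ex)
  qed
  have cg: "countable (pz ` E x)" using \<open>countable (E x)\<close> by (rule countable_image)
  obtain g where g: "E g = pz ` E x" using realize_ctbl[OF cg] by blast
  have "pz ` E x \<subseteq> H" using pz by auto
  then have gH: "g \<in> H" using g cg by (intro H_ctbl) simp_all
  have "isFun g" unfolding isFun_def
  proof (intro allI impI)
    fix z1 z2 a b c assume h: "mem z1 g \<and> mem z2 g \<and> is_pair mem z1 a b \<and> is_pair mem z2 a c"
    then obtain t1 t2 where t: "mem t1 x" "mem t2 x" "z1 = pz t1" "z2 = pz t2" using g
      by (metis E_iff imageE)
    then have "a = num (f t1) \<and> b = t1" "a = num (f t2) \<and> c = t2" using pz h pair_inj by blast+
    then have "f t1 = f t2" using num_inj by metis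
    then show "b = c" using f t \<open>a = num (f t1) \<and> b = t1\<close> \<open>a = num (f t2) \<and> c = t2\<close>
      by (auto dest: inj_onD)
  qed
  then have "funH g" using funH_iff gH by blast
  moreover have "\<exists>z\<in>H. mem z g \<and> (\<exists>n\<in>H. natH n \<and> pairH z n t)" if "t \<in> H" "mem t x" for t
    using pz[OF that(2)] g that num_H natH_iff pairH_iff
    by (intro bexI[of _ "pz t"] conjI bexI[of _ "num (f t)"]) auto
  ultimately show "ctblH x" unfolding ctblH_def using gH by blast
qed

lemma Omega1_down: assumes "\<xi> \<in> Omega1 mem" "mem \<zeta> \<xi>" shows "\<zeta> \<in> Omega1 mem"
proof -
  have o: "ordinal mem \<xi>" "countable (E \<xi>)" using assms(1) by (auto simp: Omega1_def)
  have "E \<zeta> \<subseteq> E \<xi>"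
  proof
    fix t assume "t \<in> E \<zeta>"
    then have "mem t \<zeta>" by simp
    have "transset mem \<xi>" using o(1) unfolding ordinal_def by (rule conjunct1)
    then have "mem t \<xi>" unfolding transset_def using \<open>mem t \<zeta>\<close> assms(2) by blast
    then show "t \<in> E \<xi>" by simp
  qed
  then have "countable (E \<zeta>)" using o(2) by (rule countable_subset)
  moreover have "ordinal mem \<zeta>" using o(1) assms(2) by (rule ord_elem)
  ultimately show ?thesis by (simp add: Omega1_def)
qed

lemma Omega1_H: "\<xi> \<in> Omega1 mem \<Longrightarrow> \<xi> \<in> H"
proof (induction \<xi> rule: wf_induct_rule[OF wf_mem])
  case (1 x)
  have "countable (E x)" using 1(2) by (simp add: Omega1_def)
  moreover have "E x \<subseteq> H"
  proof
    fix y assume "y \<in> E x"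
    then have "mem y x" by simp
    then show "y \<in> H" using 1(1) Omega1_down[OF 1(2)] by blast
  qed
  ultimately show ?case by (rule H_ctbl)
qed

lemma ctblord_iff: assumes "x \<in> H" shows "(ordH x \<and> ctblH x) \<longleftrightarrow> x \<in> Omega1 mem"
  using ordH_iff[OF assms] ctblH_iff[OF assms] by (simp add: Omega1_def)

lemma succ_Omega1: assumes "\<xi> \<in> Omega1 mem" shows "\<exists>s. is_succ mem s \<xi> \<and> s \<in> Omega1 mem"
proof -
  have o: "ordinal mem \<xi>" "countable (E \<xi>)" using assms by (auto simp: Omega1_def)
  obtain s where s: "E s = insert \<xi> (E \<xi>)" using realize_ctbl o(2) by (metis countable_insert)
  have "ordinal mem s" using o(1) s unfolding ordinal_def transset_def by (metis E_iff insert_iff)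
  then show ?thesis using s o(2) by (auto simp: is_succ_def Omega1_def simp del: E_iff)
qed
end

fun rel :: "nat \<Rightarrow> fm \<Rightarrow> fm" where
  "rel k (FMem i j) = FMem i j"
| "rel k (FLe i j) = FLe i j"
| "rel k (FEq i j) = FEq i j"
| "rel k (FNeg \<phi>) = FNeg (rel k \<phi>)"
| "rel k (FConj \<phi> \<psi>) = FConj (rel k \<phi>) (rel k \<psi>)"
| "rel k (FEx \<phi>) = FEx (FConj (FMem 0 (Suc k)) (rel (Suc k) \<phi>))"

lemma sat_rel: "sat D mem le (rel k \<phi>) e = sat (D \<inter> ext mem (e k)) mem le \<phi> e"
proof (induction \<phi> arbitrary: k e)
  case (FEx \<phi>)
  show ?case by (simp add: FEx ext_def) blast
qed simp_all

fun bnd :: "fm \<Rightarrow> nat" where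
  "bnd (FMem i j) = Suc (max i j)"
| "bnd (FLe i j) = Suc (max i j)"
| "bnd (FEq i j) = Suc (max i j)"
| "bnd (FNeg \<phi>) = bnd \<phi>"
| "bnd (FConj \<phi> \<psi>) = max (bnd \<phi>) (bnd \<psi>)"
| "bnd (FEx \<phi>) = bnd \<phi> - 1"

lemma sat_bnd: "(\<And>n. n < bnd \<phi> \<Longrightarrow> e n = e' n) \<Longrightarrow> sat D mem le \<phi> e = sat D mem le \<phi> e'"
proof (induction \<phi> arbitrary: e e')
  case (FEx \<phi>)
  have "sat D mem le \<phi> (case_nat x e) = sat D mem le \<phi> (case_nat x e')" for x
  proof (rule FEx.IH)
    fix n assume n: "n < bnd \<phi>"
    show "case_nat x e n = case_nat x e' n"
    proof (cases n)
      case (Suc m)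
      then have "m < bnd (FEx \<phi>)" using n by simp
      then show ?thesis using Suc FEx.prems by simp
    qed simp
  qed
  then show ?case by simp
next
  case (FMem i j)
  then have "e i = e' i" "e j = e' j" by simp_all
  then show ?case by simp
next
  case (FLe i j)
  then have "e i = e' i" "e j = e' j" by simp_all
  then show ?case by simp
next
  case (FEq i j)
  then have "e i = e' i" "e j = e' j" by simp_all
  then show ?case by simp
next
  case (FNeg \<phi>)
  have "sat D mem le \<phi> e = sat D mem le \<phi> e'" by (rule FNeg.IH) (simp add: FNeg.prems)
  then show ?case by simp
next
  case (FConj \<phi> \<psi>)
  have "sat D mem le \<phi> e = sat D mem le \<phi> e'" by (rule FConj.IH(1)) (simp add: FConj.prems)
  moreover have "sat D mem le \<psi> e = sat D mem le \<psi> e'" by (rule FConj.IH(2)) (simp add: FConj.prems)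
  ultimately show ?case by simp
qed

lemma all_case_nat: "x \<in> A \<Longrightarrow> \<forall>n. e n \<in> A \<Longrightarrow> \<forall>n. case_nat x e n \<in> A"
  by (simp split: nat.split)

context univl
begin

declare num.simps[simp del]

lemma elem_H: "elem_sub mem le M \<Longrightarrow> E M \<subseteq> H"
  by (simp add: elem_sub_def)

lemma elemD: "elem_sub mem le M \<Longrightarrow> (\<forall>n. e n \<in> E M) \<Longrightarrow> sat (E M) mem le \<phi> e \<longleftrightarrow> Sat \<phi> e"
  by (simp add: elem_sub_def)

lemma TV: assumes "elem_sub mem le M" "\<forall>n. e n \<in> E M" "Sat (FEx \<phi>) e"
  shows "\<exists>x\<in>E M. Sat \<phi> (case_nat x e)"
proof -
  have "sat (E M) mem le (FEx \<phi>) e" using elemD[OF assms(1,2)] assms(3) by blast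
  then obtain x where "x \<in> E M" "sat (E M) mem le \<phi> (case_nat x e)" by auto
  moreover have "\<forall>n. case_nat x e n \<in> E M" using all_case_nat[OF \<open>x \<in> E M\<close> assms(2)] .
  ultimately show ?thesis using elemD[OF assms(1)] by blast
qed

lemma TV2: "Sat (FEx \<phi>) e \<Longrightarrow> \<forall>n. e n \<in> E M \<Longrightarrow> elem_sub mem le M \<Longrightarrow> \<exists>x\<in>E M. Sat \<phi> (case_nat x e)"
  using TV by blast

lemma E2_elem: "M \<in> E2 mem le \<Longrightarrow> elem_sub mem le M"
  by (auto simp: E2_def E2_0_def E2_1_def)

lemma num_in_M: assumes "elem_sub mem le M" "d \<in> E M" shows "num k \<in> E M"
proof (induction k)
  case 0
  have "emptyH (num 0)" using emptyH_iff[OF num_H] E_num0 by blast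
  then have "Sat (FEx (fEmpty 0)) (\<lambda>_. d)" using num_H[of 0] by auto
  moreover have "\<forall>n. (\<lambda>_. d) n \<in> E M" using assms(2) by simp
  ultimately have "\<exists>x\<in>E M. Sat (fEmpty 0) (case_nat x (\<lambda>_. d))" by (rule TV2[OF _ _ assms(1)])
  then obtain x where x: "x \<in> E M" "Sat (fEmpty 0) (case_nat x (\<lambda>_. d))" by blast
  then have "emptyH x" by simp
  moreover have "x \<in> H" using x(1) elem_H[OF assms(1)] by blast
  ultimately have "E x = {}" using emptyH_iff by blast
  then have "x = num 0" using E_num0 ext_inj by metis
  then show ?case using x by simp
next
  case (Suc k)
  have "succH (num (Suc k)) (num k)" using succH_iff[OF num_H num_H] E_numS by (simp add: is_succ_def del: E_iff)
  then have "Sat (FEx (fSucc 0 1)) (case_nat (num k) (\<lambda>_. d))"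
    using num_H[of "Suc k"] by auto
  moreover have "\<forall>n. case_nat (num k) (\<lambda>_. d) n \<in> E M" using Suc assms(2) by (simp split: nat.split)
  ultimately have "\<exists>x\<in>E M. Sat (fSucc 0 1) (case_nat x (case_nat (num k) (\<lambda>_. d)))"
    by (rule TV2[OF _ _ assms(1)])
  then obtain x where x: "x \<in> E M" "Sat (fSucc 0 1) (case_nat x (case_nat (num k) (\<lambda>_. d)))" by blast
  then have "succH x (num k)" by simp
  moreover have "x \<in> H" using x(1) elem_H[OF assms(1)] by blast
  ultimately have "is_succ mem x (num k)" using succH_iff num_H by blast
  then have "E x = E (num (Suc k))" using E_numS by (simp add: is_succ_def del: E_iff)
  then have "x = num (Suc k)" using ext_inj by blast
  then show ?case using x by simp
qed

lemma fun_val: assumes M: "elem_sub mem le M" and g: "g \<in> E M" "isFun g" and a: "a \<in> E M"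
  and z: "mem z g" "is_pair mem z a b" shows "b \<in> E M"
proof -
  have gH: "g \<in> H" and aH: "a \<in> H" using g a elem_H[OF M] by blast+
  have zH: "z \<in> H" using gH z H_down by blast
  have bH: "b \<in> H" using pair_H[OF z(2) zH] by blast
  let ?e = "case_nat a (case_nat g (\<lambda>_. g))"
  have pz: "pairH z a b" using z zH bH aH pairH_iff by blast
  have "Sat (FEx (FEx (FConj (FMem 0 3) (fPair 0 2 1)))) ?e"
    using pz zH bH z(1) by (simp add: numeral_3_eq_3) blast
  moreover have "\<forall>n. ?e n \<in> E M" using g a by (simp split: nat.split)
  ultimately have "\<exists>w\<in>E M. Sat (FEx (FConj (FMem 0 3) (fPair 0 2 1))) (case_nat w ?e)"
    by (rule TV2[OF _ _ M])
  then obtain w where w: "w \<in> E M" "Sat (FEx (FConj (FMem 0 3) (fPair 0 2 1))) (case_nat w ?e)" by blast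
  from w(2) obtain z' where z': "z' \<in> H" "mem z' g" "pairH z' a w" by (simp add: numeral_3_eq_3) blast
  have "w \<in> H" using w elem_H[OF M] by blast
  then have "is_pair mem z' a w" using z' pairH_iff aH by blast
  then have "w = b" using g(2) z z' unfolding isFun_def by blast
  then show ?thesis using w by simp
qed

lemma ctbl_sub: assumes M: "elem_sub mem le M" and X: "X \<in> E M" "countable (E X)"
  shows "E X \<subseteq> E M"
proof
  fix t assume t: "t \<in> E X"
  have XH: "X \<in> H" using X elem_H[OF M] by blast
  have "Sat (fCtbl 0) (\<lambda>_. X)" using ctblH_iff[OF XH] X by simp
  then have s1: "Sat (FEx (FConj (fFun 0) (fAll (fImp (FMem 0 2)
   (FEx (FConj (FMem 0 2) (FEx (FConj (fNat 0) (fPair 1 0 2))))))))) (\<lambda>_. X)"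
    by (simp only: fCtbl_def numeral_2_eq_2)
  have s2: "\<forall>n. (\<lambda>_. X) n \<in> E M" using X by simp
  obtain g where g: "g \<in> E M" "Sat (FConj (fFun 0) (fAll (fImp (FMem 0 2)
   (FEx (FConj (FMem 0 2) (FEx (FConj (fNat 0) (fPair 1 0 2)))))))) (case_nat g (\<lambda>_. X))"
    using TV[OF M s2 s1] by (rule bexE) blast
  have gH: "g \<in> H" using g elem_H[OF M] by blast
  have tH: "t \<in> H" using t XH H_down by simp
  from g(2) have "funH g" and
    h: "\<forall>t\<in>H. mem t X \<longrightarrow> (\<exists>z\<in>H. mem z g \<and> (\<exists>n\<in>H. natH n \<and> pairH z n t))"
    by (simp_all add: numeral_2_eq_2)
  then have fg: "isFun g" using funH_iff gH by blast
  obtain z n where zn: "z \<in> H" "mem z g" "n \<in> H" "natH n" "pairH z n t" using h tH t by simp blast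
  obtain k where "n = num k" using natH_iff zn by blast
  moreover have "num k \<in> E M" using num_in_M[OF M X(1)] .
  ultimately show "t \<in> E M" using fun_val[OF M g(1) fg, of n z t] zn pairH_iff tH by blast
qed

end

context univl
begin

lemma E2_0_props: "Q \<in> E2_0 mem le \<Longrightarrow> elem_sub mem le Q \<and> countable (E Q)"
  by (simp add: E2_0_def)

lemma E2_0_H: assumes "Q \<in> E2_0 mem le" shows "Q \<in> H"
proof -
  have "elem_sub mem le Q" "countable (E Q)" using E2_0_props[OF assms] by auto
  then show ?thesis using H_ctbl elem_H by blast
qed

lemma IA_E: assumes "internally_approachable mem le P"
  obtains Q where "\<forall>\<xi>\<in>Omega1 mem. Q \<xi> \<in> E2_0 mem le"
      "\<forall>\<xi>\<in>Omega1 mem. \<forall>\<eta>\<in>Omega1 mem. mem \<xi> \<eta> \<longrightarrow>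
            mem (Q \<xi>) (Q \<eta>) \<and> ext mem (Q \<xi>) \<subseteq> ext mem (Q \<eta>)"
      "\<forall>\<eta>\<in>Omega1 mem. is_limit mem \<eta> \<longrightarrow>
            ext mem (Q \<eta>) = (\<Union>\<xi>\<in>ext mem \<eta>. ext mem (Q \<xi>))"
      "ext mem P = (\<Union>\<xi>\<in>Omega1 mem. ext mem (Q \<xi>))"
      "\<forall>\<eta>\<in>Omega1 mem. \<forall>\<eta>'. is_succ mem \<eta>' \<eta> \<longrightarrow>
            (\<exists>s. is_seq mem s \<eta> Q \<and> mem s (Q \<eta>'))"
proof -
  from assms[unfolded internally_approachable_def] obtain Q where
    h: "(\<forall>\<xi>\<in>Omega1 mem. Q \<xi> \<in> E2_0 mem le)
      \<and> (\<forall>\<xi>\<in>Omega1 mem. \<forall>\<eta>\<in>Omega1 mem. mem \<xi> \<eta> \<longrightarrow>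
            mem (Q \<xi>) (Q \<eta>) \<and> ext mem (Q \<xi>) \<subseteq> ext mem (Q \<eta>))
      \<and> (\<forall>\<eta>\<in>Omega1 mem. is_limit mem \<eta> \<longrightarrow>
            ext mem (Q \<eta>) = (\<Union>\<xi>\<in>ext mem \<eta>. ext mem (Q \<xi>)))
      \<and> ext mem P = (\<Union>\<xi>\<in>Omega1 mem. ext mem (Q \<xi>))
      \<and> (\<forall>\<eta>\<in>Omega1 mem. \<forall>\<eta>'. is_succ mem \<eta>' \<eta> \<longrightarrow>
            (\<exists>s. is_seq mem s \<eta> Q \<and> mem s (Q \<eta>')))" by (elim exE)
  from h show thesis by (elim conjE) (rule that)
qed

lemma IA_Omega1: assumes P: "P \<in> E2_1 mem le" and eta: "\<eta> \<in> Omega1 mem" shows "\<eta> \<in> E P"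
proof -
  have "internally_approachable mem le P" using P by (simp add: E2_1_def)
  then obtain Q where Q1: "\<forall>\<xi>\<in>Omega1 mem. Q \<xi> \<in> E2_0 mem le"
    and Q4: "E P = (\<Union>\<xi>\<in>Omega1 mem. E (Q \<xi>))"
    and Q5: "\<forall>\<eta>\<in>Omega1 mem. \<forall>\<eta>'. is_succ mem \<eta>' \<eta> \<longrightarrow> (\<exists>s. is_seq mem s \<eta> Q \<and> mem s (Q \<eta>'))"
    by (rule IA_E)
  obtain s where s: "is_succ mem s \<eta>" "s \<in> Omega1 mem" using succ_Omega1[OF eta] by blast
  obtain s' where s': "is_seq mem s' \<eta> Q" "mem s' (Q s)" using Q5 eta s(1) by blast
  have Qs: "elem_sub mem le (Q s)" using Q1 s(2) E2_0_props by blast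
  have s'H: "s' \<in> H" using s'(2) elem_H[OF Qs] by auto
  have etaH: "\<eta> \<in> H" using Omega1_H[OF eta] .
  define P' where "P' = (\<lambda>t. \<exists>z\<in>H. mem z s' \<and> (\<exists>w\<in>H. pairH z t w))"
  have key: "mem t \<eta> \<longleftrightarrow> P' t" if tH: "t \<in> H" for t
  proof
    assume t: "mem t \<eta>"
    then have "t \<in> Omega1 mem" using Omega1_down eta by blast
    then have QtH: "Q t \<in> H" using Q1 E2_0_H by blast
    obtain z where z: "z \<in> H" "is_pair mem z t (Q t)" using pair_exists_H[OF tH QtH] by blast
    have "z \<in> {z. \<exists>\<xi>. mem \<xi> \<eta> \<and> is_pair mem z \<xi> (Q \<xi>)}" using z(2) t by blast
    then have "z \<in> E s'" using s'(1) unfolding is_seq_def by simp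
    then have "mem z s'" by simp
    then show "P' t" unfolding P'_def using z QtH pairH_iff tH by blast
  next
    assume "P' t"
    then obtain z w where zw: "z \<in> H" "mem z s'" "w \<in> H" "pairH z t w" unfolding P'_def by blast
    then have p: "is_pair mem z t w" using pairH_iff tH by blast
    have "z \<in> E s'" using zw(2) by simp
    then obtain \<xi> where "mem \<xi> \<eta>" "is_pair mem z \<xi> (Q \<xi>)" using s'(1) unfolding is_seq_def by blast
    then show "mem t \<eta>" using p pair_inj by blast
  qed
  have ext1: "extH \<eta> P'" unfolding extH_def using key by blast
  have "Sat (FEx (fExt 0 (FEx (FConj (FMem 0 3) (FEx (fPair 1 2 0)))))) (\<lambda>_. s')"
    using ext1 etaH unfolding P'_def by (simp add: numeral_3_eq_3) blast
  moreover have "\<forall>n. (\<lambda>_. s') n \<in> E (Q s)" using s'(2) by simp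
  ultimately have "\<exists>x\<in>E (Q s). Sat (fExt 0 (FEx (FConj (FMem 0 3) (FEx (fPair 1 2 0))))) (case_nat x (\<lambda>_. s'))"
    by (rule TV2[OF _ _ Qs])
  then obtain x where x: "x \<in> E (Q s)" "extH x P'" unfolding P'_def by (simp add: numeral_3_eq_3 del: E_iff) blast
  have xH: "x \<in> H" using x(1) elem_H[OF Qs] by blast
  have "E x = E \<eta>"
  proof (intro set_eqI iffI)
    fix t assume "t \<in> E x"
    then have "t \<in> H" "mem t x" using xH H_down by auto
    then show "t \<in> E \<eta>" using x(2) key unfolding extH_def by auto
  next
    fix t assume "t \<in> E \<eta>"
    then have "t \<in> H" "mem t \<eta>" using etaH H_down by auto
    then show "t \<in> E x" using x(2) key unfolding extH_def by auto
  qed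
  then have "x = \<eta>" by (rule ext_inj)
  then show ?thesis using x(1) Q4 s(2) by blast
qed

lemma inter_elem: assumes N: "elem_sub mem le N" and M: "elem_sub mem le M" and NM: "mem N M"
  and K: "E K = E N \<inter> E M" shows "elem_sub mem le K"
proof -
  have NH: "E N \<subseteq> H" using elem_H[OF N] .
  have main: "(\<forall>n. e n \<in> E N \<inter> E M) \<Longrightarrow> sat (E N \<inter> E M) mem le \<phi> e = Sat \<phi> e" for \<phi> e
  proof (induction \<phi> arbitrary: e)
    case (FNeg \<phi>)
    then show ?case by simp
  next
    case (FConj \<phi> \<psi>)
    then show ?case by simp
  next
    case (FEx \<phi>)
    have ex_e: "\<forall>n. case_nat x e n \<in> E N \<inter> E M" if "x \<in> E N \<inter> E M" for x
      using all_case_nat[OF that FEx.prems] .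
    show ?case
    proof
      assume "sat (E N \<inter> E M) mem le (FEx \<phi>) e"
      then obtain x where x: "x \<in> E N \<inter> E M" "sat (E N \<inter> E M) mem le \<phi> (case_nat x e)" by auto
      then have "Sat \<phi> (case_nat x e)" using FEx.IH ex_e by blast
      moreover have "x \<in> H" using x(1) NH by blast
      ultimately show "Sat (FEx \<phi>) e" by auto
    next
      assume h: "Sat (FEx \<phi>) e"
      have eN: "\<forall>n. e n \<in> E N" and eM: "\<forall>n. e n \<in> E M" using FEx.prems by auto
      have "sat (E N) mem le (FEx \<phi>) e" using h elemD[OF N eN] by blast
      then obtain x where x: "x \<in> E N" "sat (E N) mem le \<phi> (case_nat x e)" by auto
      define k where "k = bnd \<phi>"
      define e' where "e' = e(k := N)"
      have agree: "sat D mem le \<phi> (case_nat y e') = sat D mem le \<phi> (case_nat y e)" for D y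
      proof (rule sat_bnd)
        fix n assume n: "n < bnd \<phi>"
        show "case_nat y e' n = case_nat y e n"
        proof (cases n)
          case (Suc m)
          then have "m \<noteq> k" using n k_def by simp
          then show ?thesis using Suc by (simp add: e'_def)
        qed simp
      qed
      have HN: "{x \<in> H. mem x N} = {y. mem y N}" using NH by auto
      have sat_r: "Sat (FConj (FMem 0 (Suc k)) (rel (Suc k) \<phi>)) (case_nat y e') \<longleftrightarrow>
          mem y N \<and> sat (E N) mem le \<phi> (case_nat y e)" for y
        by (simp add: sat_rel e'_def agree[symmetric] ext_def Int_def HN)
      have "Sat (FEx (FConj (FMem 0 (Suc k)) (rel (Suc k) \<phi>))) e'"
        using x NH sat_r by auto
      moreover have "\<forall>n. e' n \<in> E M" using eM NM by (simp add: e'_def)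
      ultimately have "\<exists>y\<in>E M. Sat (FConj (FMem 0 (Suc k)) (rel (Suc k) \<phi>)) (case_nat y e')"
        by (rule TV2[OF _ _ M])
      then obtain y where y: "y \<in> E M" "mem y N" "sat (E N) mem le \<phi> (case_nat y e)"
        using sat_r by blast
      have yN: "y \<in> E N" using y(2) by simp
      have "Sat \<phi> (case_nat y e)" using y(3) elemD[OF N] all_case_nat[OF yN eN] by blast
      then have "sat (E N \<inter> E M) mem le \<phi> (case_nat y e)" using FEx.IH ex_e y(1) yN by blast
      then show "sat (E N \<inter> E M) mem le (FEx \<phi>) e" using y(1) yN by auto
    qed
  qed simp_all
  show ?thesis unfolding elem_sub_def K using main NH by blast
qed

end

definition "fLIM = FEx (FConj (FMem 0 3) (FEx (FConj (FMem 0 6) (FEx (FConj (fPair 1 2 0) (FMem 3 0))))))"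
definition "fA2 = fAll (fImp (FMem 0 2) (FEx (FConj (FMem 0 2) (FEx (FEx (FConj (fPair 2 1 0) (FConj (fCtblOrd 1) (FMem 3 0))))))))"
definition "fA3 = fAll (fImp (FMem 0 1) (FEx (FEx (FConj (fPair 2 1 0) (FConj (fCtblOrd 1) (FConj (fCtbl 0) (FConj (FMem 0 4) (fImp (fLimit 1) (fExt 0 fLIM)))))))))"
definition "fA4 = fAll (fImp (fCtblOrd 0) (FEx (FConj (FMem 0 2) (FEx (fPair 1 2 0)))))"
definition "fChain = FConj (fFun 0) (FConj fA2 (FConj fA3 fA4))"

context univl
begin

lemma sat_fCtblOrd[simp]: "Sat (fCtblOrd x) e = (ordH (e x) \<and> ctblH (e x))"
  by (simp add: fCtblOrd_def)

definition "chainH C N \<longleftrightarrow> funH C \<and>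
 (\<forall>y\<in>H. mem y N \<longrightarrow> (\<exists>z\<in>H. mem z C \<and> (\<exists>\<xi>\<in>H. \<exists>X\<in>H. pairH z \<xi> X \<and> ((ordH \<xi> \<and> ctblH \<xi>) \<and> mem y X)))) \<and>
 (\<forall>z\<in>H. mem z C \<longrightarrow> (\<exists>\<xi>\<in>H. \<exists>X\<in>H. pairH z \<xi> X \<and> ((ordH \<xi> \<and> ctblH \<xi>) \<and> ctblH X \<and> mem X N \<and>
     (limitH \<xi> \<longrightarrow> extH X (\<lambda>y. \<exists>\<zeta>\<in>H. mem \<zeta> \<xi> \<and> (\<exists>z'\<in>H. mem z' C \<and> (\<exists>X'\<in>H. pairH z' \<zeta> X' \<and> mem y X'))))))) \<and>
 (\<forall>\<xi>\<in>H. (ordH \<xi> \<and> ctblH \<xi>) \<longrightarrow> (\<exists>z\<in>H. mem z C \<and> (\<exists>X\<in>H. pairH z \<xi> X)))"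

lemma sat_fChain: "Sat fChain e \<longleftrightarrow> chainH (e 0) (e 1)"
  unfolding fChain_def fA2_def fA3_def fA4_def fLIM_def chainH_def by (simp add: numeral_3_eq_3 numeral_2_eq_2 eval_nat_numeral)


definition "chainOK C N \<longleftrightarrow> isFun C \<and>
 (\<forall>y. mem y N \<longrightarrow> (\<exists>z \<xi> X. mem z C \<and> is_pair mem z \<xi> X \<and> \<xi> \<in> Omega1 mem \<and> mem y X)) \<and>
 (\<forall>z. mem z C \<longrightarrow> (\<exists>\<xi> X. is_pair mem z \<xi> X \<and> \<xi> \<in> Omega1 mem \<and> countable (E X) \<and> mem X N \<and>
     (is_limit mem \<xi> \<longrightarrow> E X = {y. \<exists>\<zeta> z' X'. mem \<zeta> \<xi> \<and> mem z' C \<and> is_pair mem z' \<zeta> X' \<and> mem y X'}))) \<and>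
 (\<forall>\<xi>\<in>Omega1 mem. \<exists>z X. mem z C \<and> is_pair mem z \<xi> X)"

lemma ball_memC: "(\<And>z. mem z C \<Longrightarrow> z \<in> A) \<Longrightarrow> (\<And>z. z \<in> A \<Longrightarrow> P z = Q z) \<Longrightarrow>
  (\<forall>z\<in>A. mem z C \<longrightarrow> P z) = (\<forall>z. mem z C \<longrightarrow> Q z)"
  by blast

lemma bex_pair: assumes "z \<in> H"
  shows "(\<exists>a\<in>H. \<exists>b\<in>H. pairH z a b \<and> P a b) \<longleftrightarrow> (\<exists>a b. is_pair mem z a b \<and> P a b)"
proof
  assume "\<exists>a\<in>H. \<exists>b\<in>H. pairH z a b \<and> P a b"
  then obtain a b where "a \<in> H" "b \<in> H" "pairH z a b" "P a b" by blast
  then show "\<exists>a b. is_pair mem z a b \<and> P a b" using pairH_iff[OF assms] by blast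
next
  assume "\<exists>a b. is_pair mem z a b \<and> P a b"
  then obtain a b where ab: "is_pair mem z a b" "P a b" by blast
  have "a \<in> H" "b \<in> H" using pair_H[OF ab(1) assms] by auto
  then show "\<exists>a\<in>H. \<exists>b\<in>H. pairH z a b \<and> P a b" using ab pairH_iff[OF assms] by blast
qed

lemma bex_pair2: assumes "z \<in> H" "a \<in> H"
  shows "(\<exists>b\<in>H. pairH z a b \<and> P b) \<longleftrightarrow> (\<exists>b. is_pair mem z a b \<and> P b)"
proof
  assume "\<exists>b\<in>H. pairH z a b \<and> P b"
  then obtain b where "b \<in> H" "pairH z a b" "P b" by blast
  then show "\<exists>b. is_pair mem z a b \<and> P b" using pairH_iff[OF assms] by blast
next
  assume "\<exists>b. is_pair mem z a b \<and> P b"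
  then obtain b where ab: "is_pair mem z a b" "P b" by blast
  have "b \<in> H" using pair_H[OF ab(1) assms(1)] by auto
  then show "\<exists>b\<in>H. pairH z a b \<and> P b" using ab pairH_iff[OF assms] by blast
qed

lemma chainH_iff: assumes CH: "C \<in> H" and NH: "N \<in> H" shows "chainH C N \<longleftrightarrow> chainOK C N"
proof -
  have memC: "z \<in> H" if "mem z C" for z using H_down[OF CH that] .
  have memN: "y \<in> H" if "mem y N" for y using H_down[OF NH that] .
  have c1: "funH C \<longleftrightarrow> isFun C" using funH_iff[OF CH] .
  have c2: "(\<forall>y\<in>H. mem y N \<longrightarrow> (\<exists>z\<in>H. mem z C \<and> (\<exists>\<xi>\<in>H. \<exists>X\<in>H. pairH z \<xi> X \<and> ((ordH \<xi> \<and> ctblH \<xi>) \<and> mem y X))))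
     \<longleftrightarrow> (\<forall>y. mem y N \<longrightarrow> (\<exists>z \<xi> X. mem z C \<and> is_pair mem z \<xi> X \<and> \<xi> \<in> Omega1 mem \<and> mem y X))"
  proof -
    have in1: "(\<exists>\<xi>\<in>H. \<exists>X\<in>H. pairH z \<xi> X \<and> ((ordH \<xi> \<and> ctblH \<xi>) \<and> mem y X))
        \<longleftrightarrow> (\<exists>\<xi> X. is_pair mem z \<xi> X \<and> (\<xi> \<in> Omega1 mem \<and> mem y X))" if "z \<in> H" for z y
    proof -
      have "(\<exists>\<xi>\<in>H. \<exists>X\<in>H. pairH z \<xi> X \<and> ((ordH \<xi> \<and> ctblH \<xi>) \<and> mem y X))
          \<longleftrightarrow> (\<exists>\<xi>\<in>H. \<exists>X\<in>H. pairH z \<xi> X \<and> (\<xi> \<in> Omega1 mem \<and> mem y X))"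
        using ctblord_iff by blast
      also have "\<dots> \<longleftrightarrow> (\<exists>\<xi> X. is_pair mem z \<xi> X \<and> (\<xi> \<in> Omega1 mem \<and> mem y X))"
        by (rule bex_pair[OF that])
      finally show ?thesis .
    qed
    show ?thesis
    proof
      assume L: "\<forall>y\<in>H. mem y N \<longrightarrow> (\<exists>z\<in>H. mem z C \<and> (\<exists>\<xi>\<in>H. \<exists>X\<in>H. pairH z \<xi> X \<and> ((ordH \<xi> \<and> ctblH \<xi>) \<and> mem y X)))"
      show "\<forall>y. mem y N \<longrightarrow> (\<exists>z \<xi> X. mem z C \<and> is_pair mem z \<xi> X \<and> \<xi> \<in> Omega1 mem \<and> mem y X)"
      proof (intro allI impI)
        fix y assume "mem y N"
        then obtain z where "z \<in> H" "mem z C" "\<exists>\<xi>\<in>H. \<exists>X\<in>H. pairH z \<xi> X \<and> ((ordH \<xi> \<and> ctblH \<xi>) \<and> mem y X)"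
          using L memN by blast
        then show "\<exists>z \<xi> X. mem z C \<and> is_pair mem z \<xi> X \<and> \<xi> \<in> Omega1 mem \<and> mem y X" using in1 by blast
      qed
    next
      assume R: "\<forall>y. mem y N \<longrightarrow> (\<exists>z \<xi> X. mem z C \<and> is_pair mem z \<xi> X \<and> \<xi> \<in> Omega1 mem \<and> mem y X)"
      show "\<forall>y\<in>H. mem y N \<longrightarrow> (\<exists>z\<in>H. mem z C \<and> (\<exists>\<xi>\<in>H. \<exists>X\<in>H. pairH z \<xi> X \<and> ((ordH \<xi> \<and> ctblH \<xi>) \<and> mem y X)))"
      proof (intro ballI impI)
        fix y assume "mem y N"
        then obtain z \<xi> X where "mem z C" "is_pair mem z \<xi> X" "\<xi> \<in> Omega1 mem" "mem y X" using R by blast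
        moreover have "z \<in> H" using memC \<open>mem z C\<close> .
        ultimately show "\<exists>z\<in>H. mem z C \<and> (\<exists>\<xi>\<in>H. \<exists>X\<in>H. pairH z \<xi> X \<and> ((ordH \<xi> \<and> ctblH \<xi>) \<and> mem y X))"
          using in1 by blast
      qed
    qed
  qed
  have lim: "extH X (\<lambda>y. \<exists>\<zeta>\<in>H. mem \<zeta> \<xi> \<and> (\<exists>z'\<in>H. mem z' C \<and> (\<exists>X'\<in>H. pairH z' \<zeta> X' \<and> mem y X')))
     \<longleftrightarrow> E X = {y. \<exists>\<zeta> z' X'. mem \<zeta> \<xi> \<and> mem z' C \<and> is_pair mem z' \<zeta> X' \<and> mem y X'}"
    if XH: "X \<in> H" and xH: "\<xi> \<in> H" for X \<xi>
  proof -
    have eq: "(\<exists>\<zeta>\<in>H. mem \<zeta> \<xi> \<and> (\<exists>z'\<in>H. mem z' C \<and> (\<exists>X'\<in>H. pairH z' \<zeta> X' \<and> mem y X')))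
      \<longleftrightarrow> (\<exists>\<zeta> z' X'. mem \<zeta> \<xi> \<and> mem z' C \<and> is_pair mem z' \<zeta> X' \<and> mem y X')" for y
    proof
      assume "\<exists>\<zeta>\<in>H. mem \<zeta> \<xi> \<and> (\<exists>z'\<in>H. mem z' C \<and> (\<exists>X'\<in>H. pairH z' \<zeta> X' \<and> mem y X'))"
      then obtain \<zeta> z' X' where h: "\<zeta> \<in> H" "mem \<zeta> \<xi>" "z' \<in> H" "mem z' C" "X' \<in> H" "pairH z' \<zeta> X'" "mem y X'"
        by blast
      then have "is_pair mem z' \<zeta> X'" using pairH_iff by blast
      then show "\<exists>\<zeta> z' X'. mem \<zeta> \<xi> \<and> mem z' C \<and> is_pair mem z' \<zeta> X' \<and> mem y X'" using h by blast
    next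
      assume "\<exists>\<zeta> z' X'. mem \<zeta> \<xi> \<and> mem z' C \<and> is_pair mem z' \<zeta> X' \<and> mem y X'"
      then obtain \<zeta> z' X' where h: "mem \<zeta> \<xi>" "mem z' C" "is_pair mem z' \<zeta> X'" "mem y X'" by blast
      have "z' \<in> H" using memC h(2) .
      moreover have "\<zeta> \<in> H" "X' \<in> H" using pair_H[OF h(3) \<open>z' \<in> H\<close>] by auto
      ultimately show "\<exists>\<zeta>\<in>H. mem \<zeta> \<xi> \<and> (\<exists>z'\<in>H. mem z' C \<and> (\<exists>X'\<in>H. pairH z' \<zeta> X' \<and> mem y X'))"
        using h pairH_iff by blast
    qed
    have imp: "y \<in> H" if "\<exists>\<zeta>\<in>H. mem \<zeta> \<xi> \<and> (\<exists>z'\<in>H. mem z' C \<and> (\<exists>X'\<in>H. pairH z' \<zeta> X' \<and> mem y X'))" for y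
      using that H_down by blast
    have "extH X (\<lambda>y. \<exists>\<zeta>\<in>H. mem \<zeta> \<xi> \<and> (\<exists>z'\<in>H. mem z' C \<and> (\<exists>X'\<in>H. pairH z' \<zeta> X' \<and> mem y X')))
      \<longleftrightarrow> E X = {y. \<exists>\<zeta>\<in>H. mem \<zeta> \<xi> \<and> (\<exists>z'\<in>H. mem z' C \<and> (\<exists>X'\<in>H. pairH z' \<zeta> X' \<and> mem y X'))}"
      by (rule extH_iff[OF XH imp])
    also have "{y. \<exists>\<zeta>\<in>H. mem \<zeta> \<xi> \<and> (\<exists>z'\<in>H. mem z' C \<and> (\<exists>X'\<in>H. pairH z' \<zeta> X' \<and> mem y X'))}
      = {y. \<exists>\<zeta> z' X'. mem \<zeta> \<xi> \<and> mem z' C \<and> is_pair mem z' \<zeta> X' \<and> mem y X'}" using eq by blast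
    finally show ?thesis .
  qed
  have c3: "(\<forall>z\<in>H. mem z C \<longrightarrow> (\<exists>\<xi>\<in>H. \<exists>X\<in>H. pairH z \<xi> X \<and> ((ordH \<xi> \<and> ctblH \<xi>) \<and> ctblH X \<and> mem X N \<and>
     (limitH \<xi> \<longrightarrow> extH X (\<lambda>y. \<exists>\<zeta>\<in>H. mem \<zeta> \<xi> \<and> (\<exists>z'\<in>H. mem z' C \<and> (\<exists>X'\<in>H. pairH z' \<zeta> X' \<and> mem y X')))))))
   \<longleftrightarrow> (\<forall>z. mem z C \<longrightarrow> (\<exists>\<xi> X. is_pair mem z \<xi> X \<and> \<xi> \<in> Omega1 mem \<and> countable (E X) \<and> mem X N \<and>
     (is_limit mem \<xi> \<longrightarrow> E X = {y. \<exists>\<zeta> z' X'. mem \<zeta> \<xi> \<and> mem z' C \<and> is_pair mem z' \<zeta> X' \<and> mem y X'})))"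
  proof -
    have in3: "(\<exists>\<xi>\<in>H. \<exists>X\<in>H. pairH z \<xi> X \<and> ((ordH \<xi> \<and> ctblH \<xi>) \<and> ctblH X \<and> mem X N \<and>
     (limitH \<xi> \<longrightarrow> extH X (\<lambda>y. \<exists>\<zeta>\<in>H. mem \<zeta> \<xi> \<and> (\<exists>z'\<in>H. mem z' C \<and> (\<exists>X'\<in>H. pairH z' \<zeta> X' \<and> mem y X'))))))
     \<longleftrightarrow> (\<exists>\<xi>\<in>H. \<exists>X\<in>H. pairH z \<xi> X \<and> (\<xi> \<in> Omega1 mem \<and> countable (E X) \<and> mem X N \<and>
     (is_limit mem \<xi> \<longrightarrow> E X = {y. \<exists>\<zeta> z' X'. mem \<zeta> \<xi> \<and> mem z' C \<and> is_pair mem z' \<zeta> X' \<and> mem y X'})))" for z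
    proof -
      have "((ordH \<xi> \<and> ctblH \<xi>) \<and> ctblH X \<and> mem X N \<and>
       (limitH \<xi> \<longrightarrow> extH X (\<lambda>y. \<exists>\<zeta>\<in>H. mem \<zeta> \<xi> \<and> (\<exists>z'\<in>H. mem z' C \<and> (\<exists>X'\<in>H. pairH z' \<zeta> X' \<and> mem y X')))))
       \<longleftrightarrow> (\<xi> \<in> Omega1 mem \<and> countable (E X) \<and> mem X N \<and>
       (is_limit mem \<xi> \<longrightarrow> E X = {y. \<exists>\<zeta> z' X'. mem \<zeta> \<xi> \<and> mem z' C \<and> is_pair mem z' \<zeta> X' \<and> mem y X'}))"
        if "\<xi> \<in> H" "X \<in> H" for \<xi> X
        using ctblord_iff[OF that(1)] ctblH_iff[OF that(2)] limitH_iff[OF that(1)] lim[OF that(2,1)] by simp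
      note pw = this
      show ?thesis
        apply (rule bex_cong[OF refl])
        apply (rule bex_cong[OF refl])
        apply (simp only: pw)
        done
    qed
    show ?thesis
    proof -
      have "(\<forall>z\<in>H. mem z C \<longrightarrow> (\<exists>\<xi>\<in>H. \<exists>X\<in>H. pairH z \<xi> X \<and> (\<xi> \<in> Omega1 mem \<and> countable (E X) \<and> mem X N \<and>
       (is_limit mem \<xi> \<longrightarrow> E X = {y. \<exists>\<zeta> z' X'. mem \<zeta> \<xi> \<and> mem z' C \<and> is_pair mem z' \<zeta> X' \<and> mem y X'}))))
       \<longleftrightarrow> (\<forall>z. mem z C \<longrightarrow> (\<exists>\<xi> X. is_pair mem z \<xi> X \<and> (\<xi> \<in> Omega1 mem \<and> countable (E X) \<and> mem X N \<and>
       (is_limit mem \<xi> \<longrightarrow> E X = {y. \<exists>\<zeta> z' X'. mem \<zeta> \<xi> \<and> mem z' C \<and> is_pair mem z' \<zeta> X' \<and> mem y X'}))))"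
        apply (rule ball_memC[where A=H])
        apply (erule memC)
        apply (rule bex_pair)
        apply assumption
        done
      then show ?thesis using in3 by simp
    qed
  qed
  have c4: "(\<forall>\<xi>\<in>H. (ordH \<xi> \<and> ctblH \<xi>) \<longrightarrow> (\<exists>z\<in>H. mem z C \<and> (\<exists>X\<in>H. pairH z \<xi> X)))
     \<longleftrightarrow> (\<forall>\<xi>\<in>Omega1 mem. \<exists>z X. mem z C \<and> is_pair mem z \<xi> X)"
  proof -
    have "(\<exists>z\<in>H. mem z C \<and> (\<exists>X\<in>H. pairH z \<xi> X)) \<longleftrightarrow> (\<exists>z X. mem z C \<and> is_pair mem z \<xi> X)"
      if "\<xi> \<in> H" for \<xi>
      using bex_pair2[OF _ that, of _ "\<lambda>_. True"] memC by auto
    then show ?thesis using ctblord_iff Omega1_H by blast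
  qed
  show ?thesis unfolding chainH_def chainOK_def using c1 c2 c3 c4 by simp
qed
end

context univl
begin

lemma chain_exists: assumes N: "N \<in> E2_1 mem le" shows "\<exists>C\<in>H. chainOK C N"
proof -
  have IA: "internally_approachable mem le N" and card: "|E N| =o aleph1" and NE: "elem_sub mem le N"
    using N by (auto simp: E2_1_def)
  obtain Q where Q1: "\<forall>\<xi>\<in>Omega1 mem. Q \<xi> \<in> E2_0 mem le"
    and Q2: "\<forall>\<xi>\<in>Omega1 mem. \<forall>\<eta>\<in>Omega1 mem. mem \<xi> \<eta> \<longrightarrow> mem (Q \<xi>) (Q \<eta>) \<and> E (Q \<xi>) \<subseteq> E (Q \<eta>)"
    and Q3: "\<forall>\<eta>\<in>Omega1 mem. is_limit mem \<eta> \<longrightarrow> E (Q \<eta>) = (\<Union>\<xi>\<in>E \<eta>. E (Q \<xi>))"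
    and Q4: "E N = (\<Union>\<xi>\<in>Omega1 mem. E (Q \<xi>))"
    using IA by (rule IA_E)
  have QH: "Q \<xi> \<in> H" if "\<xi> \<in> Omega1 mem" for \<xi> using Q1 that E2_0_H by blast
  define pz where "pz \<xi> = (SOME z. z \<in> H \<and> is_pair mem z \<xi> (Q \<xi>))" for \<xi>
  have pz: "pz \<xi> \<in> H \<and> is_pair mem (pz \<xi>) \<xi> (Q \<xi>)" if "\<xi> \<in> Omega1 mem" for \<xi>
  proof -
    have "\<exists>z. z \<in> H \<and> is_pair mem z \<xi> (Q \<xi>)" using pair_exists_H[OF Omega1_H[OF that] QH[OF that]] by blast
    then show ?thesis unfolding pz_def by (rule someI_ex)
  qed
  have O_sub: "Omega1 mem \<subseteq> E N" using IA_Omega1[OF N] by blast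
  have "|pz ` Omega1 mem| \<le>o |Omega1 mem|" by (rule card_of_image)
  also have "|Omega1 mem| \<le>o |E N|" by (rule card_of_mono1[OF O_sub])
  also have "|E N| \<le>o aleph1" using card ordIso_iff_ordLeq by blast
  finally have cardC: "|pz ` Omega1 mem| \<le>o aleph1" .
  obtain C where C: "E C = pz ` Omega1 mem" using realize[OF cardC] by blast
  have "pz ` Omega1 mem \<subseteq> H" using pz by blast
  then have CH: "C \<in> H" using H_up[of C] C cardC by simp
  have memC: "\<exists>\<xi>\<in>Omega1 mem. z = pz \<xi>" if "mem z C" for z
    using that C by (metis E_iff imageE)
  have pzC: "mem (pz \<xi>) C" if "\<xi> \<in> Omega1 mem" for \<xi> using C that by (metis E_iff imageI)
  have pairC: "\<xi> \<in> Omega1 mem \<and> X = Q \<xi>" if zC: "mem z C" "is_pair mem z \<xi> X" for z \<xi> X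
  proof -
    obtain \<xi>' where "\<xi>' \<in> Omega1 mem" "z = pz \<xi>'" using memC zC(1) by blast
    then show ?thesis using pz pair_inj zC(2) by metis
  qed
  have c1: "isFun C" unfolding isFun_def using pairC by metis
  have c2: "\<exists>z \<xi> X. mem z C \<and> is_pair mem z \<xi> X \<and> \<xi> \<in> Omega1 mem \<and> mem y X" if "mem y N" for y
  proof -
    have yN: "y \<in> E N" using that by simp
    have "y \<in> (\<Union>\<xi>\<in>Omega1 mem. E (Q \<xi>))" using yN Q4 by (simp only:)
    then obtain \<xi> where "\<xi> \<in> Omega1 mem" "y \<in> E (Q \<xi>)" by blast
    then have "\<xi> \<in> Omega1 mem" "mem y (Q \<xi>)" by simp_all
    then show ?thesis using pz pzC by blast
  qed
  have c3: "\<exists>\<xi> X. is_pair mem z \<xi> X \<and> \<xi> \<in> Omega1 mem \<and> countable (E X) \<and> mem X N \<and>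
     (is_limit mem \<xi> \<longrightarrow> E X = {y. \<exists>\<zeta> z' X'. mem \<zeta> \<xi> \<and> mem z' C \<and> is_pair mem z' \<zeta> X' \<and> mem y X'})"
    if zC3: "mem z C" for z
  proof -
    obtain \<xi> where xi: "\<xi> \<in> Omega1 mem" "z = pz \<xi>" using memC zC3 by blast
    have "countable (E (Q \<xi>))" using Q1 xi(1) E2_0_props by blast
    moreover have "mem (Q \<xi>) N"
    proof -
      obtain s where s: "is_succ mem s \<xi>" "s \<in> Omega1 mem" using succ_Omega1[OF xi(1)] by blast
      have "mem \<xi> s" using s(1) unfolding is_succ_def by (metis E_iff insertI1)
      then have "mem (Q \<xi>) (Q s)" using Q2 xi(1) s(2) by blast
      then have "Q \<xi> \<in> (\<Union>\<xi>\<in>Omega1 mem. E (Q \<xi>))" using s(2) by auto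
      then have "Q \<xi> \<in> E N" using Q4 by (simp only:)
      then show ?thesis by simp
    qed
    moreover have "E (Q \<xi>) = {y. \<exists>\<zeta> z' X'. mem \<zeta> \<xi> \<and> mem z' C \<and> is_pair mem z' \<zeta> X' \<and> mem y X'}"
      if "is_limit mem \<xi>"
    proof (intro set_eqI iffI)
      fix y assume "y \<in> E (Q \<xi>)"
      moreover have "E (Q \<xi>) = (\<Union>\<zeta>\<in>E \<xi>. E (Q \<zeta>))" using Q3 xi(1) that by blast
      ultimately have "y \<in> (\<Union>\<zeta>\<in>E \<xi>. E (Q \<zeta>))" by (simp only:)
      then obtain \<zeta> where "\<zeta> \<in> E \<xi>" "y \<in> E (Q \<zeta>)" by blast
      then have "mem \<zeta> \<xi>" "mem y (Q \<zeta>)" by simp_all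
      moreover have "\<zeta> \<in> Omega1 mem" using Omega1_down xi(1) \<open>mem \<zeta> \<xi>\<close> by blast
      ultimately show "y \<in> {y. \<exists>\<zeta> z' X'. mem \<zeta> \<xi> \<and> mem z' C \<and> is_pair mem z' \<zeta> X' \<and> mem y X'}"
        using pz pzC by blast
    next
      fix y assume "y \<in> {y. \<exists>\<zeta> z' X'. mem \<zeta> \<xi> \<and> mem z' C \<and> is_pair mem z' \<zeta> X' \<and> mem y X'}"
      then obtain \<zeta> z' X' where h: "mem \<zeta> \<xi>" "mem z' C" "is_pair mem z' \<zeta> X'" "mem y X'" by blast
      then have "X' = Q \<zeta>" using pairC by blast
      then have "y \<in> (\<Union>\<zeta>\<in>E \<xi>. E (Q \<zeta>))" using h by auto
      then show "y \<in> E (Q \<xi>)" using Q3 xi(1) that by blast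
    qed
    ultimately show ?thesis using pz xi by blast
  qed
  have c4: "\<forall>\<xi>\<in>Omega1 mem. \<exists>z X. mem z C \<and> is_pair mem z \<xi> X" using pz pzC by blast
  have "chainOK C N" unfolding chainOK_def using c1 c2 c3 c4 by blast
  then show ?thesis using CH by blast
qed

lemma chain_in_M: assumes M: "elem_sub mem le M" and NM: "mem N M" and N: "N \<in> E2_1 mem le"
  shows "\<exists>C\<in>E M. chainOK C N"
proof -
  have NH: "N \<in> H" using NM elem_H[OF M] by auto
  obtain C where "C \<in> H" "chainOK C N" using chain_exists[OF N] by blast
  then have "chainH C N" using chainH_iff NH by blast
  then have "Sat (FEx fChain) (\<lambda>_. N)" using \<open>C \<in> H\<close> by (auto simp: sat_fChain)
  moreover have "\<forall>n. (\<lambda>_. N) n \<in> E M" using NM by simp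
  ultimately have "\<exists>C\<in>E M. Sat fChain (case_nat C (\<lambda>_. N))" by (rule TV2[OF _ _ M])
  then obtain C' where C': "C' \<in> E M" "chainH C' N" by (auto simp: sat_fChain)
  then have "C' \<in> H" using elem_H[OF M] by blast
  then show ?thesis using C' chainH_iff NH by blast
qed

lemma E5: assumes M: "M \<in> E2_1 mem le" and N: "N \<in> E2_1 mem le" and NM: "mem N M"
  shows "E N \<subseteq> E M"
proof
  fix y assume y: "y \<in> E N"
  have ME: "elem_sub mem le M" using M by (simp add: E2_1_def)
  obtain C where C: "C \<in> E M" "chainOK C N" using chain_in_M[OF ME NM N] by blast
  have fC: "isFun C" using C(2) by (simp add: chainOK_def)
  obtain z \<xi> X where zx: "mem z C" "is_pair mem z \<xi> X" "\<xi> \<in> Omega1 mem" "mem y X"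
    using C(2) y unfolding chainOK_def by auto
  have xiM: "\<xi> \<in> E M" using IA_Omega1[OF M zx(3)] .
  have XM: "X \<in> E M" using fun_val[OF ME C(1) fC xiM zx(1,2)] .
  obtain \<xi>2 X2 where "is_pair mem z \<xi>2 X2" "countable (E X2)"
    using C(2) zx(1) unfolding chainOK_def by blast
  then have "countable (E X)" using pair_inj zx(2) by blast
  then have "E X \<subseteq> E M" using ctbl_sub[OF ME XM] by blast
  then show "y \<in> E M" using zx(4) by auto
qed

end

fun ch :: "('v \<Rightarrow> 'v \<Rightarrow> bool) \<Rightarrow> 'v list \<Rightarrow> bool" where
  "ch R (x # y # r) = (R x y \<and> ch R (y # r))"
| "ch R _ = True"

lemma all_nat_split: "(\<forall>i::nat. P i) = (P 0 \<and> (\<forall>i. P (Suc i)))"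
  by (metis not0_implies_Suc)

lemma ch_iff: "(\<forall>i. Suc i < length xs \<longrightarrow> R (xs ! i) (xs ! Suc i)) \<longleftrightarrow> ch R xs"
proof (induction R xs rule: ch.induct)
  case (1 R x y r)
  have "(\<forall>i. Suc i < length (x # y # r) \<longrightarrow> R ((x # y # r) ! i) ((x # y # r) ! Suc i)) \<longleftrightarrow>
        R x y \<and> (\<forall>i. Suc i < length (y # r) \<longrightarrow> R ((y # r) ! i) ((y # r) ! Suc i))"
    by (subst all_nat_split) simp
  then show ?case using 1 by simp
next
  case ("2_1" R) then show ?case by simp
next
  case ("2_2" R v) then show ?case by simp
qed

lemma ch_build:
  assumes "ch R (N # xs)" "\<forall>x\<in>set (N # xs). R x M"
    "\<forall>N'\<in>set xs. f N' = [N'] \<or> (\<exists>K. f N' = [K, N'] \<and> R K N' \<and> (\<forall>P. R P N' \<and> R P M \<longrightarrow> R P K))"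
  shows "ch R (N # concat (map f xs) @ [M])"
  using assms
proof (induction xs arbitrary: N)
  case Nil then show ?case by simp
next
  case (Cons N' r)
  have IH: "ch R (N' # concat (map f r) @ [M])" using Cons by simp
  have NN': "R N N'" and NM: "R N M" using Cons.prems by auto
  from Cons.prems(3) have "f N' = [N'] \<or> (\<exists>K. f N' = [K, N'] \<and> R K N' \<and> (\<forall>P. R P N' \<and> R P M \<longrightarrow> R P K))"
    by simp
  then show ?case
  proof
    assume "f N' = [N']" then show ?thesis using IH NN' by simp
  next
    assume "\<exists>K. f N' = [K, N'] \<and> R K N' \<and> (\<forall>P. R P N' \<and> R P M \<longrightarrow> R P K)"
    then obtain K where K: "f N' = [K, N']" "R K N'" "\<forall>P. R P N' \<and> R P M \<longrightarrow> R P K" by blast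
    then show ?thesis using IH NN' NM by simp
  qed
qed

context univl
begin

lemma E6: assumes M: "M \<in> E2_0 mem le" and N: "N \<in> E2_1 mem le" and NM: "mem N M"
  shows "\<exists>K. E K = E N \<inter> E M \<and> K \<in> E2_0 mem le \<and> mem K N"
proof -
  have ME: "elem_sub mem le M" and Mc: "countable (E M)" using M by (auto simp: E2_0_def)
  have NE: "elem_sub mem le N" using N by (simp add: E2_1_def)
  have MH: "E M \<subseteq> H" using elem_H[OF ME] .
  have NinM: "N \<in> E M" using NM by simp
  obtain C where C: "C \<in> E M" "chainOK C N" using chain_in_M[OF ME NM N] by blast
  have fC: "isFun C" using C(2) by (simp add: chainOK_def)
  have c2: "\<forall>y. mem y N \<longrightarrow> (\<exists>z \<xi> X. mem z C \<and> is_pair mem z \<xi> X \<and> \<xi> \<in> Omega1 mem \<and> mem y X)"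
    using C(2) by (simp add: chainOK_def)
  have c3: "\<forall>z. mem z C \<longrightarrow> (\<exists>\<xi> X. is_pair mem z \<xi> X \<and> \<xi> \<in> Omega1 mem \<and> countable (E X) \<and> mem X N \<and>
     (is_limit mem \<xi> \<longrightarrow> E X = {y. \<exists>\<zeta> z' X'. mem \<zeta> \<xi> \<and> mem z' C \<and> is_pair mem z' \<zeta> X' \<and> mem y X'}))"
    using C(2) by (simp add: chainOK_def)
  have c4: "\<forall>\<xi>\<in>Omega1 mem. \<exists>z X. mem z C \<and> is_pair mem z \<xi> X"
    using C(2) by (simp add: chainOK_def)
  define D where "D = Omega1 mem \<inter> E M"
  have Dc: "countable D" unfolding D_def using Mc by (rule countable_subset[rotated]) blast
  obtain \<delta> where d: "E \<delta> = D" using realize_ctbl[OF Dc] by blast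
  have Ddown: "\<zeta> \<in> D" if "\<xi> \<in> D" "mem \<zeta> \<xi>" for \<xi> \<zeta>
  proof -
    have "\<xi> \<in> Omega1 mem" "\<xi> \<in> E M" using that(1) by (auto simp: D_def)
    then have "countable (E \<xi>)" by (simp add: Omega1_def)
    then have "E \<xi> \<subseteq> E M" using ctbl_sub[OF ME \<open>\<xi> \<in> E M\<close>] by blast
    then have "\<zeta> \<in> E M" using that(2) by auto
    moreover have "\<zeta> \<in> Omega1 mem" using Omega1_down[OF \<open>\<xi> \<in> Omega1 mem\<close> that(2)] .
    ultimately show ?thesis by (simp add: D_def)
  qed
  have memd: "mem x \<delta> \<longleftrightarrow> x \<in> D" for x
  proof -
    have "x \<in> E \<delta> \<longleftrightarrow> x \<in> D" using d by (simp del: E_iff)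
    then show ?thesis by simp
  qed
  have dord: "ordinal mem \<delta>"
    unfolding ordinal_def transset_def
  proof (intro conjI allI impI)
    fix y z assume "mem z y \<and> mem y \<delta>"
    then show "mem z \<delta>" using memd Ddown by blast
  next
    fix y ya z assume "mem y \<delta>" "mem z ya \<and> mem ya y"
    then have "y \<in> Omega1 mem" using memd by (simp add: D_def)
    then have "ordinal mem y" by (simp add: Omega1_def)
    then have "transset mem y" unfolding ordinal_def by (rule conjunct1)
    then show "mem z y" unfolding transset_def using \<open>mem z ya \<and> mem ya y\<close> by blast
  qed
  have dO: "\<delta> \<in> Omega1 mem" using dord Dc d by (simp add: Omega1_def)
  have dH: "\<delta> \<in> H" using Omega1_H[OF dO] .
  have n0: "num 0 \<in> D"
  proof -
    have "num 0 \<in> Omega1 mem" using num_ord E_num0 by (simp add: Omega1_def)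
    moreover have "num 0 \<in> E M" using num_in_M[OF ME NinM] .
    ultimately show ?thesis by (simp add: D_def)
  qed
  have dlim: "is_limit mem \<delta>"
    unfolding is_limit_def
  proof (intro conjI allI notI)
    show "ordinal mem \<delta>" by (rule dord)
  next
    assume "E \<delta> = {}" then show False using n0 d by simp
  next
    fix \<zeta> assume s: "is_succ mem \<delta> \<zeta>"
    then have "mem \<zeta> \<delta>" unfolding is_succ_def by (metis E_iff insertI1)
    then have zD: "\<zeta> \<in> D" using memd by blast
    then have zM: "\<zeta> \<in> E M" by (simp add: D_def)
    have zH: "\<zeta> \<in> H" using zM MH by blast
    have "succH \<delta> \<zeta>" using succH_iff[OF dH zH] s by blast
    then have "Sat (FEx (fSucc 0 1)) (case_nat \<zeta> (\<lambda>_. \<zeta>))" using dH by auto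
    moreover have "\<forall>n. case_nat \<zeta> (\<lambda>_. \<zeta>) n \<in> E M" using zM by (simp split: nat.split)
    ultimately have "\<exists>x\<in>E M. Sat (fSucc 0 1) (case_nat x (case_nat \<zeta> (\<lambda>_. \<zeta>)))" by (rule TV2[OF _ _ ME])
    then obtain x where x: "x \<in> E M" "succH x \<zeta>" by auto
    have "x \<in> H" using x(1) MH by blast
    then have "is_succ mem x \<zeta>" using succH_iff zH x(2) by blast
    then have "E x = E \<delta>" using s by (simp add: is_succ_def del: E_iff)
    then have "x = \<delta>" by (rule ext_inj)
    then have "\<delta> \<in> D" using x(1) dO by (simp add: D_def)
    then have "mem \<delta> \<delta>" using memd by blast
    then show False by simp
  qed
  obtain z X where zX: "mem z C" "is_pair mem z \<delta> X" using c4 dO by blast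
  have c3z: "mem z' C \<Longrightarrow> (\<exists>\<xi> X. is_pair mem z' \<xi> X \<and> \<xi> \<in> Omega1 mem \<and> countable (E X) \<and> mem X N \<and>
     (is_limit mem \<xi> \<longrightarrow> E X = {y. \<exists>\<zeta> z' X'. mem \<zeta> \<xi> \<and> mem z' C \<and> is_pair mem z' \<zeta> X' \<and> mem y X'}))" for z'
    using c3 by (rule allE) (rule mp)
  obtain \<xi>2 X2 where h2: "is_pair mem z \<xi>2 X2" "\<xi>2 \<in> Omega1 mem" "countable (E X2)" "mem X2 N"
    "is_limit mem \<xi>2 \<longrightarrow> E X2 = {y. \<exists>\<zeta> z' X'. mem \<zeta> \<xi>2 \<and> mem z' C \<and> is_pair mem z' \<zeta> X' \<and> mem y X'}"
    using c3z[OF zX(1)] by (elim exE conjE) (rule that)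
  have "\<xi>2 = \<delta>" "X2 = X" using pair_inj[OF h2(1) zX(2)] by auto
  then have cX: "countable (E X)" and XN: "mem X N"
    and EX: "E X = {y. \<exists>\<zeta> z' X'. mem \<zeta> \<delta> \<and> mem z' C \<and> is_pair mem z' \<zeta> X' \<and> mem y X'}"
    using h2(3,4) h2(5) dlim by auto
  have EXeq: "E X = E N \<inter> E M"
  proof (intro set_eqI iffI)
    fix y assume "y \<in> E X"
    then obtain \<zeta> z' X' where h: "mem \<zeta> \<delta>" "mem z' C" "is_pair mem z' \<zeta> X'" "mem y X'"
      using EX by blast
    have zM: "\<zeta> \<in> E M" using h(1) memd by (simp add: D_def)
    have X'M: "X' \<in> E M" using fun_val[OF ME C(1) fC zM h(2,3)] .
    obtain \<xi>3 X3 where h3: "is_pair mem z' \<xi>3 X3" "\<xi>3 \<in> Omega1 mem" "countable (E X3)" "mem X3 N"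
      "is_limit mem \<xi>3 \<longrightarrow> E X3 = {y. \<exists>\<zeta> z'' X'. mem \<zeta> \<xi>3 \<and> mem z'' C \<and> is_pair mem z'' \<zeta> X' \<and> mem y X'}"
      using c3z[OF h(2)] by (elim exE conjE) (rule that)
    have "X3 = X'" using pair_inj[OF h3(1) h(3)] by auto
    then have cX': "countable (E X')" and X'N: "X' \<in> E N" using h3(3,4) by auto
    have "y \<in> E M" using ctbl_sub[OF ME X'M cX'] h(4) by auto
    moreover have "y \<in> E N" using ctbl_sub[OF NE X'N cX'] h(4) by auto
    ultimately show "y \<in> E N \<inter> E M" by blast
  next
    fix y assume y: "y \<in> E N \<inter> E M"
    obtain z0 \<xi>0 X0 where h0: "mem z0 C" "is_pair mem z0 \<xi>0 X0" "\<xi>0 \<in> Omega1 mem" "mem y X0"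
      using c2 y by auto
    have z0H: "z0 \<in> H" using C(1) h0(1) MH H_down by blast
    have xX0: "\<xi>0 \<in> H" "X0 \<in> H" using pair_H[OF h0(2) z0H] by auto
    have "Sat (FEx (FEx (FEx (FConj (FMem 1 4) (FConj (fPair 1 2 0) (FConj (fCtblOrd 2) (FMem 3 0)))))))
        (case_nat y (\<lambda>_. C))"
      using h0 z0H xX0 pairH_iff ctblord_iff by (simp add: eval_nat_numeral) blast
    moreover have "\<forall>n. case_nat y (\<lambda>_. C) n \<in> E M" using y C(1) by (simp split: nat.split)
    ultimately have "\<exists>\<xi>\<in>E M. Sat (FEx (FEx (FConj (FMem 1 4) (FConj (fPair 1 2 0) (FConj (fCtblOrd 2) (FMem 3 0))))))
        (case_nat \<xi> (case_nat y (\<lambda>_. C)))" by (rule TV2[OF _ _ ME])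
    then obtain \<xi>' z' X' where h': "\<xi>' \<in> E M" "z' \<in> H" "X' \<in> H" "mem z' C" "pairH z' \<xi>' X'"
      "ordH \<xi>'" "ctblH \<xi>'" "mem y X'"
      by (simp add: eval_nat_numeral del: E_iff) blast
    have xH': "\<xi>' \<in> H" using h'(1) MH by blast
    have "\<xi>' \<in> Omega1 mem" using ctblord_iff[OF xH'] h' by blast
    then have "mem \<xi>' \<delta>" using memd h'(1) by (simp add: D_def)
    moreover have "is_pair mem z' \<xi>' X'" using pairH_iff h' xH' by blast
    ultimately show "y \<in> E X" using EX h' by blast
  qed
  have "elem_sub mem le X" using inter_elem[OF NE ME NM EXeq] .
  then have "X \<in> E2_0 mem le" using cX by (simp add: E2_0_def)
  then show ?thesis using EXeq XN by blast
qed

end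

context univl
begin

lemma K_exists: assumes M: "M \<in> E2 mem le" and N: "N \<in> E2 mem le" and NM: "mem N M"
  shows "\<exists>K. E K = E N \<inter> E M \<and> K \<in> E2 mem le \<and> (K = N \<or> mem K N)"
proof -
  have ME: "elem_sub mem le M" using E2_elem[OF M] .
  have NinM: "N \<in> E M" using NM by simp
  show ?thesis
  proof (cases "N \<in> E2_0 mem le")
    case True
    then have "countable (E N)" by (simp add: E2_0_def)
    then have "E N \<subseteq> E M" using ctbl_sub[OF ME NinM] by blast
    then have "E N = E N \<inter> E M" by blast
    then show ?thesis using N by blast
  next
    case False
    then have N1: "N \<in> E2_1 mem le" using N by (simp add: E2_def)
    show ?thesis
    proof (cases "M \<in> E2_1 mem le")
      case True
      then have "E N \<subseteq> E M" using E5[OF True N1 NM] by blast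
      then have "E N = E N \<inter> E M" by blast
      then show ?thesis using N by blast
    next
      case False
      then have M0: "M \<in> E2_0 mem le" using M by (simp add: E2_def)
      obtain K where "E K = E N \<inter> E M" "K \<in> E2_0 mem le" "mem K N" using E6[OF M0 N1 NM] by blast
      then show ?thesis by (auto simp: E2_def)
    qed
  qed
qed

lemma main_thm:
  assumes M: "M \<in> E2 mem le" and p: "p \<in> Mforce mem le" and pM: "mem p M"
  shows "\<exists>pM \<in> Mforce mem le. Mle mem pM p \<and> mem M pM
           \<and> (\<forall>r \<in> Mforce mem le. Mle mem r p \<and> mem M r \<longrightarrow> Mle mem r pM)"
proof -
  have ME: "elem_sub mem le M" using E2_elem[OF M] .
  have pfin: "finite (E p)" and pE2: "E p \<subseteq> E2 mem le" and pch: "in_chain mem (E p)"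
    and pcl: "\<forall>N\<in>E p. \<forall>N'\<in>E p. \<exists>K\<in>E p. E K = E N \<inter> E N'"
    using p by (simp_all add: Mforce_def)
  have psub: "E p \<subseteq> E M" using ctbl_sub[OF ME _ countable_finite[OF pfin]] pM by simp
  define Kf where "Kf N = (SOME K. E K = E N \<inter> E M \<and> K \<in> E2 mem le \<and> (K = N \<or> mem K N))" for N
  have Kf: "E (Kf N) = E N \<inter> E M \<and> Kf N \<in> E2 mem le \<and> (Kf N = N \<or> mem (Kf N) N)" if "N \<in> E p" for N
  proof -
    have "mem N M" using psub that by auto
    then have "\<exists>K. E K = E N \<inter> E M \<and> K \<in> E2 mem le \<and> (K = N \<or> mem K N)"
      using K_exists[OF M] pE2 that by blast
    then show ?thesis unfolding Kf_def by (rule someI_ex)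
  qed
  have KfE: "E (Kf N) = E N \<inter> E M" if "N \<in> E p" for N using Kf[OF that] by blast
  define S where "S = E p \<union> {M} \<union> Kf ` E p"
  have Sfin: "finite S" using pfin by (simp add: S_def)
  obtain pM where pMS: "E pM = S" using realize_ctbl[OF countable_finite[OF Sfin]] by blast
  obtain xs where xs: "set xs = E p" "\<forall>i. Suc i < length xs \<longrightarrow> mem (xs ! i) (xs ! Suc i)"
    using pch unfolding in_chain_def by blast
  have chxs: "ch mem xs" using xs(2) ch_iff by blast
  define f where "f N = (if Kf N = N then [N] else [Kf N, N])" for N
  define ys where "ys = concat (map f xs) @ [M]"
  have setys: "set ys = S"
  proof -
    have "set (f N) = {N, Kf N}" for N by (auto simp: f_def)
    then have "set (concat (map f xs)) = (\<Union>N\<in>set xs. {N, Kf N})" by simp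
    also have "\<dots> = set xs \<union> Kf ` set xs" by blast
    finally show ?thesis unfolding ys_def S_def using xs(1) by auto
  qed
  have fprop: "\<forall>N'\<in>set xs. f N' = [N'] \<or> (\<exists>K. f N' = [K, N'] \<and> mem K N' \<and> (\<forall>P. mem P N' \<and> mem P M \<longrightarrow> mem P K))"
  proof
    fix N' assume "N' \<in> set xs"
    then have N'p: "N' \<in> E p" using xs(1) by simp
    show "f N' = [N'] \<or> (\<exists>K. f N' = [K, N'] \<and> mem K N' \<and> (\<forall>P. mem P N' \<and> mem P M \<longrightarrow> mem P K))"
    proof (cases "Kf N' = N'")
      case True then show ?thesis by (simp add: f_def)
    next
      case False
      then have "mem (Kf N') N'" using Kf[OF N'p] by blast
      moreover have "\<forall>P. mem P N' \<and> mem P M \<longrightarrow> mem P (Kf N')"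
      proof (intro allI impI)
        fix P assume "mem P N' \<and> mem P M"
        then have "P \<in> E (Kf N')" using KfE[OF N'p] by simp
        then show "mem P (Kf N')" by simp
      qed
      ultimately show ?thesis using False by (simp add: f_def)
    qed
  qed
  have chys: "ch mem ys"
  proof (cases xs)
    case Nil then show ?thesis by (simp add: ys_def)
  next
    case (Cons N r)
    have allM: "\<forall>x\<in>set (N # r). mem x M" using psub xs(1) Cons by auto
    have c: "ch mem (N # concat (map f r) @ [M])"
      by (rule ch_build) (use chxs Cons allM fprop in auto)
    have Np: "N \<in> E p" using xs(1) Cons by auto
    show ?thesis
    proof (cases "Kf N = N")
      case True then show ?thesis using c Cons by (simp add: ys_def f_def)
    next
      case False
      then have "mem (Kf N) N" using Kf[OF Np] by blast
      then show ?thesis using c Cons False by (simp add: ys_def f_def)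
    qed
  qed
  have ic: "in_chain mem (E pM)" unfolding in_chain_def
    using setys chys ch_iff pMS by metis
  have Kfp: "Kf N \<in> S" if "N \<in> E p" for N using that by (simp add: S_def)
  have cl: "\<exists>K\<in>S. E K = E A \<inter> E B" if A: "A \<in> S" and B: "B \<in> S" for A B
  proof -
    have cases_: "A \<in> E p \<or> A = M \<or> (\<exists>N\<in>E p. A = Kf N)" using A by (auto simp: S_def)
    have casesB: "B \<in> E p \<or> B = M \<or> (\<exists>N\<in>E p. B = Kf N)" using B by (auto simp: S_def)
    have cM: "\<exists>K\<in>S. E K = E A \<inter> E M" if "A \<in> S" for A
    proof -
      have "A \<in> E p \<or> A = M \<or> (\<exists>N\<in>E p. A = Kf N)" using that by (auto simp: S_def)
      then show ?thesis
      proof (elim disjE bexE)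
        assume "A \<in> E p" then show ?thesis using KfE Kfp by blast
      next
        assume "A = M" then show ?thesis by (auto simp: S_def)
      next
        fix N assume "N \<in> E p" "A = Kf N"
        then show ?thesis using KfE Kfp by (metis Int_assoc Int_absorb)
      qed
    qed
    have cP: "\<exists>K\<in>S. E K = E A \<inter> E B" if hA: "A \<in> S" and hB: "B \<in> E p" for A B
    proof -
      have "A \<in> E p \<or> A = M \<or> (\<exists>N\<in>E p. A = Kf N)" using hA by (auto simp: S_def)
      then show ?thesis
      proof (elim disjE bexE)
        assume "A \<in> E p"
        then obtain K where "K \<in> E p" "E K = E A \<inter> E B" using pcl hB by blast
        then show ?thesis by (auto simp: S_def)
      next
        assume "A = M" then show ?thesis using KfE[OF hB] Kfp[OF hB] by (metis Int_commute)
      next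
        fix N assume N: "N \<in> E p" "A = Kf N"
        obtain K where K: "K \<in> E p" "E K = E N \<inter> E B" using pcl hB N(1) by blast
        have "E (Kf K) = E (Kf N) \<inter> E B" using KfE[OF K(1)] KfE[OF N(1)] K(2) by blast
        then show ?thesis using Kfp[OF K(1)] N(2) by blast
      qed
    qed
    from casesB show ?thesis
    proof (elim disjE bexE)
      assume "B \<in> E p" then show ?thesis using cP A by blast
    next
      assume "B = M" then show ?thesis using cM A by blast
    next
      fix N2 assume N2: "N2 \<in> E p" "B = Kf N2"
      obtain K where K: "K \<in> S" "E K = E A \<inter> E N2" using cP[OF A N2(1)] by blast
      obtain K' where K': "K' \<in> S" "E K' = E K \<inter> E M" using cM[OF K(1)] by blast
      have "E K' = E A \<inter> E B" using K(2) K'(2) KfE[OF N2(1)] N2(2) by blast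
      then show ?thesis using K'(1) by blast
    qed
  qed
  have SE2: "S \<subseteq> E2 mem le" using pE2 M Kf by (auto simp: S_def)
  have pMf: "pM \<in> Mforce mem le"
    unfolding Mforce_def using Sfin SE2 ic cl pMS by auto
  have le1: "Mle mem pM p" unfolding Mle_def using pMS by (auto simp: S_def)
  have mM: "mem M pM" using pMS by (metis E_iff S_def UnCI insertI1 Un_insert_right)
  have minimal: "Mle mem r pM" if r: "r \<in> Mforce mem le" "Mle mem r p" "mem M r" for r
  proof -
    have rcl: "\<forall>N\<in>E r. \<forall>N'\<in>E r. \<exists>K\<in>E r. E K = E N \<inter> E N'" using r(1) by (simp add: Mforce_def)
    have pr: "E p \<subseteq> E r" using r(2) by (simp add: Mle_def)
    have "Kf N \<in> E r" if hN: "N \<in> E p" for N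
    proof -
      have "N \<in> E r" using pr hN by blast
      moreover have "M \<in> E r" using r(3) by simp
      ultimately obtain K where "K \<in> E r" "E K = E N \<inter> E M" using rcl by blast
      then have "K = Kf N" using KfE[OF hN] ext_inj by metis
      then show ?thesis using \<open>K \<in> E r\<close> by simp
    qed
    then have "S \<subseteq> E r" using pr r(3) by (auto simp: S_def)
    then show ?thesis unfolding Mle_def using pMS by simp
  qed
  show ?thesis using pMf le1 mM minimal by blast
qed

end

theorem mainTheorem1:
  fixes mem :: "'v \<Rightarrow> 'v \<Rightarrow> bool" and le :: "'v \<Rightarrow> 'v \<Rightarrow> bool"
    and M p :: 'v
  assumes "universe mem"
    and "wo_H2 mem le"
    and "M \<in> E2 mem le"
    and "p \<in> Mforce mem le"
    and "mem p M"
  shows "\<exists>pM \<in> Mforce mem le. Mle mem pM p \<and> mem M pM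
           \<and> (\<forall>r \<in> Mforce mem le. Mle mem r p \<and> mem M r \<longrightarrow> Mle mem r pM)"
proof -
  interpret univl mem le by unfold_locales (rule assms(1))
  show ?thesis by (rule main_thm[OF assms(3) assms(4) assms(5)])
qed

end
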